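(* In a soft sequence heap with rank threshold $r_0=\lceil\lg(1/\epsilon)\rceil$, at any time, for every sequence $L$ of rank $r$ and every $x\in\{-\infty\}\cup U$ (where $U$ is the key universe), $|D(L,x)|\le d_r$, where $d_r=0$ for $r\le r_0$ and $d_r=2^{r-r_0-1}$ for $r>r_0$. In particular, the number of corrupted items associated with $L$, namely $|D(L,-\infty)|$, is at most $d_r$.
   Context: Soft sequence heap with error parameter $0<\epsilon<1$. Let $r_0=\lceil \lg(1/\epsilon)\rceil$, where $\lg$ is the binary logarithm. Items are (key, value) pairs with keys from a totally ordered universe $U$; all keys are assumed distinct, and $\mathrm{key}(e)$ denotes the (real) key of item $e$. The heap stores a list $\mathcal L=L_1,\dots,L_\ell$ of nonempty sequences, each sorted increasingly by key and having a nonnegative integer rank, with $\mathrm{rank}(L_1)<\dots<\mathrm{rank}(L_\ell)$. Each item $e$ currently in a sequence carries a (possibly empty) corruption-set $C(e)$ and witness-set $W(e)$. Every item in the heap lies either in exactly one sequence or in exactly one corruption-set $C(e')$ with $e'$ in a sequence, and may additionally lie in one witness-set. The operation $\mathrm{reduce}(L)$ on a sorted sequence $L=e_1,\dots,e_m$: for every $1\le i<m/2$, the item $e_{2i}$ is removed from $L$, the items $\{e_{2i}\}\cup C(e_{2i})$ are added to $C(e_{2i+1})$, and the items $\{e_{2i}\}\cup W(e_{2i})$ are added to $W(e_{2i-1})$ (the sets $C(e_{2i}),W(e_{2i})$ cease to exist). Merging two sequences of equal rank $r$ produces their sorted union, of rank $r+1$ (corruption- and witness-sets unchanged); if $r+1>r_0$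 and $r+1-r_0$ is even, $\mathrm{reduce}$ is then applied to the result. \textsf{insert}$(e)$ puts a new rank-$0$ sequence $(e)$ (with empty sets) at the front of $\mathcal L$ and, while the first two sequences have equal rank, merges them; \textsf{meld} merges two heaps' lists by rank and then merges equal-rank sequences. \textsf{extract-min}: let $e$ be the head of a sequence whose head has minimum key; if $C(e)\neq\emptyset$, remove some $e'$ from $C(e)$ and return it; otherwise remove $e$ from its sequence and its items of $W(e)$ lose their witness (they are in no witness-set afterwards). An item is corrupted if it lies in some corruption-set $C(e')$ and in no witness-set. For an item $e\in C(e')$ with $e'$ in a sequence, define the interval $I(e)=(\mathrm{key}(e''),\mathrm{key}(e')]$ if $e\in W(e'')$ for some $e''$, and $I(e)=(-\infty,\mathrm{key}(e')]$ if $e$ lies in no witness-set. For a sequence $L$ and $x$, $D(L,x)=\{e:\exists e'\in L,\ e\in C(e'),\ x\in I(e)\}$. *)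

theory Defs
  imports Complex_Main
begin

text \<open>Items are identified with their (distinct) keys, which are
elements of a linearly ordered type; values play no role. A heap state consists of the
list of sequences (each a sorted list of items together with its rank), the
corruption-sets C and the witness-sets W of items lying in sequences.\<close>

record 'k sheap =
  seqs :: "('k list \<times> nat) list"
  cmap :: "'k \<Rightarrow> 'k set"
  wmap :: "'k \<Rightarrow> 'k set"

definition seq_items :: "('k, 'z) sheap_scheme \<Rightarrow> 'k set" where
  "seq_items H = (\<Union>(L, r)\<in>set (seqs H). set L)"

definition heap_items :: "('k, 'z) sheap_scheme \<Rightarrow> 'k set" where
  "heap_items H = seq_items H \<union> (\<Union>e\<in>seq_items H. cmap H e)"

definition seq_heads :: "('k, 'z) sheap_scheme \<Rightarrow> 'k set" where
  "seq_heads H = (\<lambda>(L, r). hd L) ` set (seqs H)"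

text \<open>0-indexed position j holds e_(j+1); the removed items e_(2i), 1 \<le> i < m/2,
are exactly those at odd positions j with j+1 < m.\<close>
definition red_pos :: "'k list \<Rightarrow> nat \<Rightarrow> bool" where
  "red_pos L j \<longleftrightarrow> odd j \<and> j + 1 < length L"

definition reduce ::
  "'k list \<Rightarrow> ('k \<Rightarrow> 'k set) \<Rightarrow> ('k \<Rightarrow> 'k set)
    \<Rightarrow> 'k list \<times> ('k \<Rightarrow> 'k set) \<times> ('k \<Rightarrow> 'k set)" where
  "reduce L C W =
    (let R = {L ! j | j. red_pos L j} in
     ([L ! j. j \<leftarrow> [0..<length L], \<not> red_pos L j],
      (\<lambda>e. if e \<in> R then {}
           else C e \<union> (\<Union>j\<in>{j. red_pos L j \<and> L ! (j + 1) = e}. insert (L ! j) (C (L ! j)))),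
      (\<lambda>e. if e \<in> R then {}
           else W e \<union> (\<Union>j\<in>{j. red_pos L j \<and> L ! (j - 1) = e}. insert (L ! j) (W (L ! j))))))"

definition merge ::
  "nat \<Rightarrow> ('k::linorder list \<times> nat) \<Rightarrow> ('k list \<times> nat) \<Rightarrow> ('k \<Rightarrow> 'k set) \<Rightarrow> ('k \<Rightarrow> 'k set)
    \<Rightarrow> ('k list \<times> nat) \<times> ('k \<Rightarrow> 'k set) \<times> ('k \<Rightarrow> 'k set)" where
  "merge r0 A B C W =
    (let L = sort (fst A @ fst B); r = Suc (snd A) in
     if r > r0 \<and> even (r - r0)
     then (case reduce L C W of (L', C', W') \<Rightarrow> ((L', r), C', W'))
     else ((L, r), C, W))"

definition merge_step :: "nat \<Rightarrow> 'k::linorder sheap \<Rightarrow> 'k sheap \<Rightarrow> bool" where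
  "merge_step r0 H H' \<longleftrightarrow>
    (\<exists>xs A B ys. seqs H = xs @ A # B # ys \<and> snd A = snd B \<and>
      (case merge r0 A B (cmap H) (wmap H) of (M, C', W') \<Rightarrow>
         H' = \<lparr>seqs = xs @ M # ys, cmap = C', wmap = W'\<rparr>))"

definition normalize :: "nat \<Rightarrow> 'k::linorder sheap \<Rightarrow> 'k sheap \<Rightarrow> bool" where
  "normalize r0 H H' \<longleftrightarrow> (merge_step r0)\<^sup>*\<^sup>* H H' \<and> sorted_wrt (<) (map snd (seqs H'))"

definition empty_heap :: "'k sheap" where
  "empty_heap = \<lparr>seqs = [], cmap = (\<lambda>_. {}), wmap = (\<lambda>_. {})\<rparr>"

definition insert_init :: "'k \<Rightarrow> 'k sheap \<Rightarrow> 'k sheap" where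
  "insert_init e H = \<lparr>seqs = ([e], 0) # seqs H, cmap = (cmap H)(e := {}), wmap = (wmap H)(e := {})\<rparr>"

definition meld_init :: "'k sheap \<Rightarrow> 'k sheap \<Rightarrow> 'k sheap" where
  "meld_init H1 H2 =
    \<lparr>seqs = sort_key snd (seqs H1 @ seqs H2),
     cmap = (\<lambda>e. if e \<in> seq_items H1 then cmap H1 e else cmap H2 e),
     wmap = (\<lambda>e. if e \<in> seq_items H1 then wmap H1 e else wmap H2 e)\<rparr>"

text \<open>Heap states reachable by a sequence of operations (heaps to be melded are built
independently and have disjoint item sets; inserted items are new).\<close>
inductive reachable :: "nat \<Rightarrow> 'k::linorder sheap \<Rightarrow> bool" for r0 where
  empty: "reachable r0 empty_heap"
| insert: "reachable r0 H \<Longrightarrow> e \<notin> heap_items H \<Longrightarrow> normalize r0 (insert_init e H) H'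
             \<Longrightarrow> reachable r0 H'"
| meld: "reachable r0 H1 \<Longrightarrow> reachable r0 H2 \<Longrightarrow> heap_items H1 \<inter> heap_items H2 = {}
             \<Longrightarrow> normalize r0 (meld_init H1 H2) H' \<Longrightarrow> reachable r0 H'"
| extract_corrupted: "reachable r0 H \<Longrightarrow> seqs H \<noteq> [] \<Longrightarrow> e = Min (seq_heads H)
             \<Longrightarrow> e' \<in> cmap H e
             \<Longrightarrow> H' = \<lparr>seqs = seqs H, cmap = (cmap H)(e := cmap H e - {e'}),
                       wmap = (\<lambda>x. wmap H x - {e'})\<rparr>
             \<Longrightarrow> reachable r0 H'"
| extract_head: "reachable r0 H \<Longrightarrow> seqs H = xs @ (e # rest, r) # ys \<Longrightarrow> e = Min (seq_heads H)
             \<Longrightarrow> cmap H e = {}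
             \<Longrightarrow> H' = \<lparr>seqs = xs @ (if rest = [] then [] else [(rest, r)]) @ ys,
                       cmap = cmap H, wmap = (wmap H)(e := {})\<rparr>
             \<Longrightarrow> reachable r0 H'"

text \<open>Membership of x in the interval I(e), for e \<in> C(e'); x = None encodes -\<infinity>.\<close>
definition in_I :: "'k::linorder sheap \<Rightarrow> 'k \<Rightarrow> 'k \<Rightarrow> 'k option \<Rightarrow> bool" where
  "in_I H e e' x =
    (case x of
       None \<Rightarrow> \<not> (\<exists>e''\<in>seq_items H. e \<in> wmap H e'')
     | Some y \<Rightarrow> y \<le> e' \<and> (\<forall>e''\<in>seq_items H. e \<in> wmap H e'' \<longrightarrow> e'' < y))"

definition Dset :: "'k::linorder sheap \<Rightarrow> 'k list \<Rightarrow> 'k option \<Rightarrow> 'k set" where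
  "Dset H L x = {e. \<exists>e'\<in>set L. e \<in> cmap H e' \<and> in_I H e e' x}"

definition corrupted :: "'k sheap \<Rightarrow> 'k \<Rightarrow> bool" where
  "corrupted H e \<longleftrightarrow> (\<exists>e'\<in>seq_items H. e \<in> cmap H e') \<and> \<not> (\<exists>e''\<in>seq_items H. e \<in> wmap H e'')"

definition dbound :: "nat \<Rightarrow> nat \<Rightarrow> nat" where
  "dbound r0 r = (if r \<le> r0 then 0 else 2 ^ (r - r0 - 1))"

end

theory Submission
  imports Defs
begin

fun gg :: "nat \<Rightarrow> nat" where
  "gg 0 = 0"
| "gg (Suc t) = (if even (Suc t) then 2 * gg t + 1 else gg t)"

fun aa :: "nat \<Rightarrow> nat" where
  "aa 0 = 0"
| "aa (Suc t) = (if even (Suc t) then 2 * aa t + gg t + 1 else 2 * aa t)"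

lemma closed_form:
  "gg (2*m) + 1 = 2^m \<and> gg (2*m+1) + 1 = 2^m \<and> aa (2*m+1) + 2^m = 2^(2*m)
   \<and> aa (2*m+2) + 2^m = 2^(2*m+1)"
proof (induction m)
  case 0
  then show ?case by (simp add: numeral_2_eq_2)
next
  case (Suc m)
  have e1: "2 * Suc m = Suc (Suc (2*m))" by simp
  have e2: "2 * Suc m + 1 = Suc (Suc (2*m+1))" by simp
  have e3: "2 * Suc m + 2 = Suc (Suc (2*m+2))" by simp
  have g2: "gg (2 * Suc m) = 2 * gg (2*m+1) + 1" unfolding e1 by simp
  have g3: "gg (2 * Suc m + 1) = gg (2 * Suc m)" by (simp add: e1)
  have a3': "aa (Suc (2*m+2)) = (if even (Suc (2*m+2)) then 2 * aa (2*m+2) + gg (2*m+2) + 1 else 2 * aa (2*m+2))"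
    by (rule aa.simps(2))
  have o3: "\<not> even (Suc (2*m+2))" by presburger
  have a3: "aa (2 * Suc m + 1) = 2 * aa (2*m+2)"
    using a3' o3 by (simp only: e2[symmetric]) (simp add: numeral_2_eq_2)
  have a4': "aa (Suc (2 * Suc m + 1)) = (if even (Suc (2 * Suc m + 1)) then 2 * aa (2 * Suc m + 1) + gg (2 * Suc m + 1) + 1 else 2 * aa (2 * Suc m + 1))"
    by (rule aa.simps(2))
  have o4: "even (Suc (2 * Suc m + 1))" by presburger
  have e4: "2 * Suc m + 2 = Suc (2 * Suc m + 1)" by simp
  have a4: "aa (2 * Suc m + 2) = 2 * aa (2 * Suc m + 1) + gg (2 * Suc m + 1) + 1"
    unfolding e4 using a4' o4 by simp
  have i2: "gg (2*m+1) + 1 = 2^m" using Suc.IH by blast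
  have i4: "aa (2*m+2) + 2^m = 2^(2*m+1)" using Suc.IH by blast
  have p1: "(2::nat)^(Suc m) = 2*2^m" by simp
  have p2: "(2::nat)^(2*Suc m) = 2 * 2^(2*m+1)" by (simp add: power_add)
  have p3: "(2::nat)^(2*Suc m+1) = 2*2^(2*Suc m)" by simp
  have c1: "gg (2 * Suc m) + 1 = 2^Suc m" using g2 i2 p1 by linarith
  have c2: "gg (2 * Suc m + 1) + 1 = 2^Suc m" using g3 c1 by linarith
  have c3: "aa (2 * Suc m + 1) + 2^Suc m = 2^(2*Suc m)" using a3 i4 p1 p2 by linarith
  have c4: "aa (2 * Suc m + 2) + 2^Suc m = 2^(2*Suc m+1)" using a4 c3 c2 p3 by linarith
  show ?case using c1 c2 c3 c4 by blast
qed

lemma aa_dbound: "aa (r - r0) \<le> dbound r0 r"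
proof (cases "r \<le> r0")
  case True then show ?thesis by (simp add: dbound_def)
next
  case False
  define t where "t = r - r0"
  have t1: "t \<ge> 1" using False t_def by simp
  have "aa t \<le> 2^(t-1)"
  proof (cases "even t")
    case True
    then obtain k where k: "t = 2*k" by (metis evenE)
    then have "k \<ge> 1" using t1 by simp
    then obtain m where "k = m + 1" by (metis add.commute le_Suc_ex)
    then have "t = 2*m+2" using k by simp
    then show ?thesis using closed_form[of m] by simp
  next
    case False
    then obtain m where "t = 2*m+1" by (metis oddE)
    then show ?thesis using closed_form[of m] by simp
  qed
  then show ?thesis using False t_def by (simp add: dbound_def)
qed

lemma ar1: "2 * aa (r - r0) \<le> aa (Suc r - r0)"
  by (cases "r < r0") (auto simp: Suc_diff_le)

lemma ar2: "gg (r - r0) \<le> gg (Suc r - r0)"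
  by (cases "r < r0") (auto simp: Suc_diff_le)

lemma ar3: "r0 < Suc r \<Longrightarrow> even (Suc r - r0) \<Longrightarrow>
   2 * aa (r - r0) + gg (r - r0) + 1 \<le> aa (Suc r - r0) \<and> 2 * gg (r - r0) + 1 \<le> gg (Suc r - r0)"
  by (auto simp: Suc_diff_le)

lemma lc_eq: "concat (map (\<lambda>x. if P x then [f x] else []) xs) = map f (filter P xs)"
  by (induction xs) auto

definition redset :: "'k list \<Rightarrow> 'k set" where
  "redset L = {L ! j | j. red_pos L j}"

lemma reduce_fst: "fst (reduce L C W) = map (nth L) (filter (\<lambda>j. \<not> red_pos L j) [0..<length L])"
  unfolding reduce_def Let_def by (simp add: lc_eq)

lemma reduce_C: "fst (snd (reduce L C W)) = (\<lambda>e. if e \<in> redset L then {}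
           else C e \<union> (\<Union>j\<in>{j. red_pos L j \<and> L ! (j + 1) = e}. insert (L ! j) (C (L ! j))))"
  unfolding reduce_def Let_def redset_def by simp

lemma reduce_W: "snd (snd (reduce L C W)) = (\<lambda>e. if e \<in> redset L then {}
           else W e \<union> (\<Union>j\<in>{j. red_pos L j \<and> L ! (j - 1) = e}. insert (L ! j) (W (L ! j))))"
  unfolding reduce_def Let_def redset_def by simp

lemma red_lt: "red_pos L j \<Longrightarrow> j + 1 < length L"
  by (simp add: red_pos_def)

lemma red_pos_0: "\<not> red_pos L 0" by (simp add: red_pos_def)

lemma redset_sub: "redset L \<subseteq> set L"
  by (auto simp: redset_def red_pos_def)

lemma redset_iff: "distinct L \<Longrightarrow> k < length L \<Longrightarrow> L ! k \<in> redset L \<longleftrightarrow> red_pos L k"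
proof -
  assume d: "distinct L" and k: "k < length L"
  show ?thesis
  proof
    assume "L ! k \<in> redset L"
    then obtain j where j: "L ! k = L ! j" "red_pos L j" unfolding redset_def by auto
    have "j < length L" using red_lt[OF j(2)] by simp
    then have "k = j" using j(1) d k by (simp add: nth_eq_iff_index_eq)
    then show "red_pos L k" using j by simp
  qed (auto simp: redset_def)
qed

lemma set_reduce_fst: "x \<in> set (fst (reduce L C W)) \<longleftrightarrow> (\<exists>k<length L. \<not> red_pos L k \<and> x = L ! k)"
  by (auto simp: reduce_fst)

lemma set_reduce_fst': "distinct L \<Longrightarrow> set (fst (reduce L C W)) = set L - redset L"
proof (intro set_eqI iffI)
  fix x assume d: "distinct L"
  { assume "x \<in> set (fst (reduce L C W))"
    then obtain k where k: "k < length L" "\<not> red_pos L k" "x = L ! k" unfolding set_reduce_fst by blast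
    then show "x \<in> set L - redset L" using redset_iff[OF d k(1)] by auto }
  { assume "x \<in> set L - redset L"
    then obtain k where k: "k < length L" "x = L ! k" "L ! k \<notin> redset L" by (auto simp: in_set_conv_nth)
    then show "x \<in> set (fst (reduce L C W))" unfolding set_reduce_fst using redset_iff[OF d k(1)] by auto }
qed

lemma distinct_reduce_fst: "distinct L \<Longrightarrow> distinct (fst (reduce L C W))"
  by (auto simp: reduce_fst distinct_map inj_on_def nth_eq_iff_index_eq)

lemma sorted_reduce_fst: "sorted_wrt (<) L \<Longrightarrow> sorted_wrt (<) (fst (reduce L C W))"
  unfolding reduce_fst sorted_wrt_map
  by (rule sorted_wrt_filter) (auto simp: sorted_wrt_iff_nth_less sorted_wrt_upt)

lemma reduce_fst_ne: "L \<noteq> [] \<Longrightarrow> fst (reduce L C W) \<noteq> []"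
  using set_reduce_fst[of "L ! 0" L C W] red_pos_0[of L] by auto

lemma reduce_C_nonL: "e \<notin> set L \<Longrightarrow> fst (snd (reduce L C W)) e = C e"
  unfolding reduce_C using redset_sub[of L] red_lt[of L] by (auto)

lemma reduce_W_nonL: "e \<notin> set L \<Longrightarrow> snd (snd (reduce L C W)) e = W e"
proof -
  assume e: "e \<notin> set L"
  have "L ! (j - 1) \<noteq> e" if "red_pos L j" for j
  proof -
    have "j - 1 < length L" using red_lt[OF that] by simp
    then show ?thesis using e nth_mem by metis
  qed
  then have "{j. red_pos L j \<and> L ! (j - 1) = e} = {}" by auto
  then show ?thesis unfolding reduce_W using redset_sub[of L] e by auto
qed

lemma reduce_C_red: "red_pos L j \<Longrightarrow> fst (snd (reduce L C W)) (L ! j) = {}"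
  unfolding reduce_C redset_def by auto

lemma reduce_W_red: "red_pos L j \<Longrightarrow> snd (snd (reduce L C W)) (L ! j) = {}"
  unfolding reduce_W redset_def by auto


lemma reduce_C_keep:
  assumes d: "distinct L" and k: "k < length L" "\<not> red_pos L k"
  shows "fst (snd (reduce L C W)) (L ! k) = C (L ! k) \<union>
     (if 0 < k \<and> red_pos L (k - 1) then insert (L ! (k - 1)) (C (L ! (k - 1))) else {})"
proof -
  have jk: "j = k - 1 \<and> 0 < k" if "red_pos L j" "L ! (j + 1) = L ! k" for j
  proof -
    have "j + 1 < length L" using red_lt[OF that(1)] .
    then have "j + 1 = k" using d k that(2) by (simp add: nth_eq_iff_index_eq)
    then show ?thesis by simp
  qed
  have "{j. red_pos L j \<and> L ! (j + 1) = L ! k} = (if 0 < k \<and> red_pos L (k - 1) then {k - 1} else {})"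
  proof (cases "0 < k \<and> red_pos L (k - 1)")
    case True
    show ?thesis
    proof (rule set_eqI)
      fix j show "j \<in> {j. red_pos L j \<and> L ! (j + 1) = L ! k} \<longleftrightarrow> j \<in> (if 0 < k \<and> red_pos L (k - 1) then {k - 1} else {})"
        using jk[of j] True by auto
    qed
  next
    case False
    show ?thesis
    proof (rule set_eqI)
      fix j show "j \<in> {j. red_pos L j \<and> L ! (j + 1) = L ! k} \<longleftrightarrow> j \<in> (if 0 < k \<and> red_pos L (k - 1) then {k - 1} else {})"
        using jk[of j] False by auto
    qed
  qed
  moreover have "L ! k \<notin> redset L" using redset_iff[OF d k(1)] k by simp
  ultimately show ?thesis unfolding reduce_C by (simp split: if_splits)
qed

lemma reduce_W_keep:
  assumes d: "distinct L" and k: "k < length L" "\<not> red_pos L k"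
  shows "snd (snd (reduce L C W)) (L ! k) = W (L ! k) \<union>
     (if red_pos L (k + 1) then insert (L ! (k + 1)) (W (L ! (k + 1))) else {})"
proof -
  have jk: "j = k + 1" if "red_pos L j" "L ! (j - 1) = L ! k" for j
  proof -
    have "odd j" "j + 1 < length L" using that(1) by (auto simp: red_pos_def)
    then have "j - 1 < length L" "j \<ge> 1" by (auto elim: oddE)
    then have "j - 1 = k" using d k that(2) by (simp add: nth_eq_iff_index_eq)
    then show ?thesis using \<open>j \<ge> 1\<close> by simp
  qed
  have "{j. red_pos L j \<and> L ! (j - 1) = L ! k} = (if red_pos L (k + 1) then {k + 1} else {})"
  proof (cases "red_pos L (k + 1)")
    case True
    show ?thesis
    proof (rule set_eqI)
      fix j show "j \<in> {j. red_pos L j \<and> L ! (j - 1) = L ! k} \<longleftrightarrow> j \<in> (if red_pos L (k + 1) then {k + 1} else {})"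
        using jk[of j] True by auto
    qed
  next
    case False
    show ?thesis
    proof (rule set_eqI)
      fix j show "j \<in> {j. red_pos L j \<and> L ! (j - 1) = L ! k} \<longleftrightarrow> j \<in> (if red_pos L (k + 1) then {k + 1} else {})"
        using jk[of j] False by auto
    qed
  qed
  moreover have "L ! k \<notin> redset L" using redset_iff[OF d k(1)] k by simp
  ultimately show ?thesis unfolding reduce_W by (simp split: if_splits)
qed

definition wit :: "'k::linorder sheap \<Rightarrow> 'k \<Rightarrow> 'k set" where
  "wit H f = {w \<in> seq_items H. f \<in> wmap H w}"

definition si_of :: "('k list \<times> nat) list \<Rightarrow> 'k set" where
  "si_of S = (\<Union>(L, r)\<in>set S. set L)"

lemma seq_items_si: "seq_items H = si_of (seqs H)"
  by (simp add: seq_items_def si_of_def)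

lemma si_of_simps[simp]: "si_of [] = {}" "si_of (p # S) = set (fst p) \<union> si_of S"
  "si_of (S @ T) = si_of S \<union> si_of T"
  by (auto simp: si_of_def split: prod.splits)

lemma si_of_mem: "(K, r) \<in> set S \<Longrightarrow> w \<in> set K \<Longrightarrow> w \<in> si_of S"
  unfolding si_of_def by auto

lemma set_concat_si: "set (concat (map fst S)) = si_of S"
  by (auto simp: si_of_def)

lemma in_I_wit: "in_I H f c x = (case x of None \<Rightarrow> wit H f = {} | Some y \<Rightarrow> y \<le> c \<and> (\<forall>w\<in>wit H f. w < y))"
  by (auto simp: in_I_def wit_def split: option.splits)

lemma Dset_mono:
  assumes "\<And>c f. c \<in> set K \<Longrightarrow> f \<in> cmap H' c \<Longrightarrow> f \<in> cmap H c \<and> wit H f \<subseteq> wit H' f"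
  shows "Dset H' K x \<subseteq> Dset H K x"
  using assms unfolding Dset_def in_I_wit by (fastforce split: option.splits)

definition sinv :: "'k::linorder sheap \<Rightarrow> bool" where
  "sinv H \<longleftrightarrow>
    distinct (concat (map fst (seqs H))) \<and>
    (\<forall>(L, r)\<in>set (seqs H). L \<noteq> [] \<and> sorted_wrt (<) L) \<and>
    (\<forall>e. e \<notin> seq_items H \<longrightarrow> cmap H e = {} \<and> wmap H e = {}) \<and>
    (\<forall>e e'. e \<in> seq_items H \<longrightarrow> e \<notin> cmap H e') \<and>
    (\<forall>e1 e2. e1 \<noteq> e2 \<longrightarrow> cmap H e1 \<inter> cmap H e2 = {}) \<and>
    (\<forall>(L, r)\<in>set (seqs H). \<forall>w\<in>set L. \<forall>f\<in>wmap H w. \<exists>c\<in>set L. w < c \<and> f \<in> cmap H c) \<and>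
    (\<forall>e. finite (cmap H e) \<and> finite (wmap H e))"

lemma Dset_sub: "Dset H K x \<subseteq> (\<Union>c\<in>set K. cmap H c)"
  by (auto simp: Dset_def)

lemma Dset_finite: "sinv H \<Longrightarrow> finite (Dset H K x)"
  by (rule finite_subset[OF Dset_sub]) (auto simp: sinv_def)

lemma Dset_cong: assumes a: "seq_items H = seq_items H'" and b: "cmap H = cmap H'" and c: "wmap H = wmap H'"
  shows "Dset H = Dset H'"
  unfolding Dset_def in_I_def by (simp only: a b c)

lemma finite_red: "finite {j. red_pos L j \<and> P j}"
  by (rule finite_subset[of _ "{..<length L}"]) (auto dest: red_lt)

lemma reduce_C_mem: "f \<in> fst (snd (reduce L C W)) e \<Longrightarrow> e \<notin> redset L \<and>
   (f \<in> C e \<or> (\<exists>j. red_pos L j \<and> L ! (j + 1) = e \<and> (f = L ! j \<or> f \<in> C (L ! j))))"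
  unfolding reduce_C by (auto split: if_splits)

lemma reduce_W_mem: "f \<in> snd (snd (reduce L C W)) e \<Longrightarrow> e \<notin> redset L \<and>
   (f \<in> W e \<or> (\<exists>j. red_pos L j \<and> L ! (j - 1) = e \<and> (f = L ! j \<or> f \<in> W (L ! j))))"
  unfolding reduce_W by (auto split: if_splits)

lemma reduce_C_fin: "(\<And>e. finite (C e)) \<Longrightarrow> finite (fst (snd (reduce L C W)) e)"
  unfolding reduce_C using finite_red[of L] by auto

lemma reduce_W_fin: "(\<And>e. finite (W e)) \<Longrightarrow> finite (snd (snd (reduce L C W)) e)"
  unfolding reduce_W using finite_red[of L] by auto

lemma reduce_C_redset: "e \<in> redset L \<Longrightarrow> fst (snd (reduce L C W)) e = {}"
  unfolding reduce_C by simp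

lemma reduce_W_redset: "e \<in> redset L \<Longrightarrow> snd (snd (reduce L C W)) e = {}"
  unfolding reduce_W by simp

context
  fixes H :: "'k::linorder sheap" and xs ys :: "('k list \<times> nat) list" and L :: "'k list" and s :: nat
  assumes inv: "sinv H" and sq: "seqs H = xs @ (L, s) # ys"
begin

definition "rL = fst (reduce L (cmap H) (wmap H))"
definition "rC = fst (snd (reduce L (cmap H) (wmap H)))"
definition "rW = snd (snd (reduce L (cmap H) (wmap H)))"
definition "rH = \<lparr>seqs = xs @ (rL, s) # ys, cmap = rC, wmap = rW\<rparr>"

lemma dist_all: "distinct (concat (map fst xs) @ L @ concat (map fst ys))"
  using inv sq by (simp add: sinv_def)

lemma dL: "distinct L" using dist_all by simp

lemma sL: "sorted_wrt (<) L" using inv sq by (auto simp: sinv_def)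

lemma neL: "L \<noteq> []" using inv sq by (auto simp: sinv_def)

lemma disjL: "set L \<inter> si_of (xs @ ys) = {}"
  using dist_all by (auto simp: set_concat_si[symmetric])

lemma si_H: "seq_items H = si_of xs \<union> set L \<union> si_of ys"
  by (simp add: seq_items_si sq Un_assoc)

lemma si_rH: "seq_items rH = seq_items H - redset L"
  using si_H disjL redset_sub[of L] set_reduce_fst'[OF dL] 
  by (auto simp: seq_items_si rH_def rL_def)

lemma rL_set: "set rL = set L - redset L"
  unfolding rL_def by (rule set_reduce_fst'[OF dL])

lemma I3: "e \<notin> seq_items H \<Longrightarrow> cmap H e = {} \<and> wmap H e = {}"
  using inv by (simp add: sinv_def)
lemma I4: "e \<in> seq_items H \<Longrightarrow> e \<notin> cmap H e'"
  using inv by (simp add: sinv_def)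
lemma I5: "e1 \<noteq> e2 \<Longrightarrow> cmap H e1 \<inter> cmap H e2 = {}"
  using inv by (simp add: sinv_def)
lemma I6: "(K, r) \<in> set (seqs H) \<Longrightarrow> w \<in> set K \<Longrightarrow> f \<in> wmap H w \<Longrightarrow> \<exists>c\<in>set K. w < c \<and> f \<in> cmap H c"
  using inv by (fastforce simp: sinv_def)
lemma I7: "finite (cmap H e)" "finite (wmap H e)"
  using inv by (auto simp: sinv_def)

lemma L_in: "(L, s) \<in> set (seqs H)" using sq by simp

lemma nth_L: "k < length L \<Longrightarrow> L ! k \<in> seq_items H"
  using si_H by auto

lemma rC_nonL: "e \<notin> set L \<Longrightarrow> rC e = cmap H e"
  unfolding rC_def by (rule reduce_C_nonL)
lemma rW_nonL: "e \<notin> set L \<Longrightarrow> rW e = wmap H e"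
  unfolding rW_def by (rule reduce_W_nonL)

lemma rC_keep: "k < length L \<Longrightarrow> \<not> red_pos L k \<Longrightarrow> rC (L ! k) = cmap H (L ! k) \<union>
     (if 0 < k \<and> red_pos L (k - 1) then insert (L ! (k - 1)) (cmap H (L ! (k - 1))) else {})"
  unfolding rC_def by (rule reduce_C_keep[OF dL])
lemma rW_keep: "k < length L \<Longrightarrow> \<not> red_pos L k \<Longrightarrow> rW (L ! k) = wmap H (L ! k) \<union>
     (if red_pos L (k + 1) then insert (L ! (k + 1)) (wmap H (L ! (k + 1))) else {})"
  unfolding rW_def by (rule reduce_W_keep[OF dL])

lemma rC_mem: "f \<in> rC e \<Longrightarrow> e \<notin> redset L \<and>
   (f \<in> cmap H e \<or> (\<exists>j. red_pos L j \<and> L ! (j + 1) = e \<and> (f = L ! j \<or> f \<in> cmap H (L ! j))))"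
  unfolding rC_def by (rule reduce_C_mem)
lemma rW_mem: "f \<in> rW e \<Longrightarrow> e \<notin> redset L \<and>
   (f \<in> wmap H e \<or> (\<exists>j. red_pos L j \<and> L ! (j - 1) = e \<and> (f = L ! j \<or> f \<in> wmap H (L ! j))))"
  unfolding rW_def by (rule reduce_W_mem)

lemma red_odd: "red_pos L j \<Longrightarrow> odd j" by (simp add: red_pos_def)

lemma red_succ: "red_pos L j \<Longrightarrow> j + 1 < length L \<and> \<not> red_pos L (j + 1)"
  by (auto simp: red_pos_def)

lemma red_pred: "red_pos L j \<Longrightarrow> 0 < j \<and> j - 1 < length L \<and> \<not> red_pos L (j - 1)"
  by (auto simp: red_pos_def elim: oddE)

lemma nth_less: "i < j \<Longrightarrow> j < length L \<Longrightarrow> L ! i < L ! j"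
  using sL by (simp add: sorted_wrt_iff_nth_less)

lemma nth_le: "i \<le> j \<Longrightarrow> j < length L \<Longrightarrow> L ! i \<le> L ! j"
  using nth_less by (metis order.order_iff_strict)

lemma rW_sup: "e \<in> seq_items H \<Longrightarrow> e \<notin> redset L \<Longrightarrow> wmap H e \<subseteq> rW e"
proof -
  assume e: "e \<in> seq_items H" "e \<notin> redset L"
  show ?thesis
  proof (cases "e \<in> set L")
    case True
    then obtain k where k: "k < length L" "e = L ! k" by (auto simp: in_set_conv_nth)
    then have "\<not> red_pos L k" using e redset_iff[OF dL k(1)] by simp
    then show ?thesis using rW_keep[OF k(1)] k by auto
  next
    case False
    then show ?thesis using rW_nonL by simp
  qed
qed

lemma rC_sup: "e \<notin> redset L \<Longrightarrow> cmap H e \<subseteq> rC e"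
proof -
  assume e: "e \<notin> redset L"
  show ?thesis
  proof (cases "e \<in> set L")
    case True
    then obtain k where k: "k < length L" "e = L ! k" by (auto simp: in_set_conv_nth)
    then have "\<not> red_pos L k" using e redset_iff[OF dL k(1)] by simp
    then show ?thesis using rC_keep[OF k(1)] k by auto
  next
    case False
    then show ?thesis using rC_nonL by simp
  qed
qed

lemma keep_in_rL: "k < length L \<Longrightarrow> \<not> red_pos L k \<Longrightarrow> L ! k \<in> set rL"
  unfolding rL_def set_reduce_fst by blast

lemma keep_in_rH: "k < length L \<Longrightarrow> \<not> red_pos L k \<Longrightarrow> L ! k \<in> seq_items rH"
  using keep_in_rL by (auto simp: rH_def seq_items_si)

lemma red_wit: "red_pos L j \<Longrightarrow> L ! j \<in> rW (L ! (j - 1))"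
proof -
  assume r: "red_pos L j"
  have p: "0 < j" "j - 1 < length L" "\<not> red_pos L (j - 1)" using red_pred[OF r] by auto
  have "j - 1 + 1 = j" using p by simp
  then show ?thesis using rW_keep[OF p(2,3)] r by auto
qed

lemma redW_wit: "red_pos L j \<Longrightarrow> wmap H (L ! j) \<subseteq> rW (L ! (j - 1))"
proof -
  assume r: "red_pos L j"
  have p: "0 < j" "j - 1 < length L" "\<not> red_pos L (j - 1)" using red_pred[OF r] by auto
  have "j - 1 + 1 = j" using p by simp
  then show ?thesis using rW_keep[OF p(2,3)] r by auto
qed

lemma wit_lift: "w \<in> wit H f \<Longrightarrow>
   (w \<notin> redset L \<and> w \<in> wit rH f) \<or> (\<exists>p. red_pos L p \<and> w = L ! p \<and> L ! (p - 1) \<in> wit rH f)"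
proof -
  assume w: "w \<in> wit H f"
  then have w1: "w \<in> seq_items H" "f \<in> wmap H w" by (auto simp: wit_def)
  show ?thesis
  proof (cases "w \<in> redset L")
    case False
    then have "w \<in> seq_items rH" "f \<in> rW w" using si_rH w1 rW_sup[OF w1(1) False] by auto
    then show ?thesis using False by (auto simp: wit_def rH_def)
  next
    case True
    then obtain p where p: "red_pos L p" "w = L ! p" by (auto simp: redset_def)
    have q: "0 < p" "p - 1 < length L" "\<not> red_pos L (p - 1)" using red_pred[OF p(1)] by auto
    have "L ! (p - 1) \<in> seq_items rH" using keep_in_rH[OF q(2,3)] .
    moreover have "f \<in> rW (L ! (p - 1))" using redW_wit[OF p(1)] w1 p by auto
    ultimately show ?thesis using p by (auto simp: wit_def rH_def)
  qed
qed

lemma lift_C: "c \<in> set L \<Longrightarrow> f \<in> cmap H c \<Longrightarrow> \<exists>c'\<in>set rL. c \<le> c' \<and> f \<in> rC c'"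
proof -
  assume c: "c \<in> set L" "f \<in> cmap H c"
  then obtain i where i: "i < length L" "c = L ! i" by (auto simp: in_set_conv_nth)
  show ?thesis
  proof (cases "red_pos L i")
    case False
    then show ?thesis using keep_in_rL[OF i(1) False] rC_keep[OF i(1) False] i c by auto
  next
    case True
    have s: "i + 1 < length L" "\<not> red_pos L (i + 1)" using red_succ[OF True] by auto
    have "rC (L ! (i + 1)) = cmap H (L ! (i + 1)) \<union> insert (L ! i) (cmap H (L ! i))"
      using rC_keep[OF s] True by simp
    then have "f \<in> rC (L ! (i + 1))" using c i by auto
    moreover have "c \<le> L ! (i + 1)" using nth_le[of i "i+1"] s i by simp
    ultimately show ?thesis using keep_in_rL[OF s] by blast
  qed
qed

lemma sinv_rH: "sinv rH"
proof -
  have d1: "distinct (concat (map fst (seqs rH)))"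
  proof -
    have "distinct rL" unfolding rL_def by (rule distinct_reduce_fst[OF dL])
    moreover have "set rL \<subseteq> set L" using rL_set by auto
    ultimately show ?thesis using dist_all by (auto simp: rH_def)
  qed
  have d2: "\<forall>(K, r)\<in>set (seqs rH). K \<noteq> [] \<and> sorted_wrt (<) K"
  proof -
    have "rL \<noteq> []" unfolding rL_def by (rule reduce_fst_ne[OF neL])
    moreover have "sorted_wrt (<) rL" unfolding rL_def by (rule sorted_reduce_fst[OF sL])
    ultimately show ?thesis using inv sq by (auto simp: rH_def sinv_def)
  qed
  have d3: "\<forall>e. e \<notin> seq_items rH \<longrightarrow> cmap rH e = {} \<and> wmap rH e = {}"
  proof (intro allI impI)
    fix e assume e: "e \<notin> seq_items rH"
    show "cmap rH e = {} \<and> wmap rH e = {}"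
    proof (cases "e \<in> redset L")
      case True
      then show ?thesis unfolding rH_def rC_def rW_def
        by (simp add: reduce_C_redset reduce_W_redset)
    next
      case False
      then have "e \<notin> seq_items H" using e si_rH by auto
      then have "e \<notin> set L" using si_H by auto
      then show ?thesis using I3 \<open>e \<notin> seq_items H\<close> rC_nonL rW_nonL by (simp add: rH_def)
    qed
  qed
  have d4: "\<forall>e e'. e \<in> seq_items rH \<longrightarrow> e \<notin> cmap rH e'"
  proof (intro allI impI notI)
    fix e e' assume e: "e \<in> seq_items rH" and ee: "e \<in> cmap rH e'"
    have e1: "e \<in> seq_items H" "e \<notin> redset L" using e si_rH by auto
    from ee have "e \<in> rC e'" by (simp add: rH_def)
    from rC_mem[OF this] obtain j where "e \<in> cmap H e' \<or> (red_pos L j \<and> (e = L ! j \<or> e \<in> cmap H (L ! j)))"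
      by blast
    then show False using I4[OF e1(1)] e1(2) by (auto simp: redset_def)
  qed
  have d5: "\<forall>e1 e2. e1 \<noteq> e2 \<longrightarrow> cmap rH e1 \<inter> cmap rH e2 = {}"
  proof (intro allI impI)
    fix e1 e2 :: 'k assume ne: "e1 \<noteq> e2"
    show "cmap rH e1 \<inter> cmap rH e2 = {}"
    proof (rule ccontr)
      assume "cmap rH e1 \<inter> cmap rH e2 \<noteq> {}"
      then obtain f where f: "f \<in> rC e1" "f \<in> rC e2" by (auto simp: rH_def)
      note m1 = rC_mem[OF f(1)] and m2 = rC_mem[OF f(2)]
      have inj: "j1 = j2" if "red_pos L j1" "red_pos L j2" "L ! j1 = L ! j2" for j1 j2
        using that red_lt[of L j1] red_lt[of L j2] dL by (simp add: nth_eq_iff_index_eq)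
      have redin: "L ! j \<in> redset L" if "red_pos L j" for j using that by (auto simp: redset_def)
      have seqj: "L ! j \<in> seq_items H" if "red_pos L j" for j using nth_L red_lt[OF that] by simp
      show False
      proof (cases "f \<in> cmap H e1")
        case A1: True
        show False
        proof (cases "f \<in> cmap H e2")
          case True then show False using I5[OF ne] A1 by auto
        next
          case False
          then obtain j2 where j2: "red_pos L j2" "f = L ! j2 \<or> f \<in> cmap H (L ! j2)" using m2 by blast
          from j2(2) show False
          proof
            assume "f = L ! j2" then show False using I4[OF seqj[OF j2(1)]] A1 by simp
          next
            assume "f \<in> cmap H (L ! j2)"
            then have "e1 = L ! j2" using I5[of e1 "L ! j2"] A1 by auto
            then show False using m1 redin[OF j2(1)] by simp
          qed
        qed
      next
        case A1: False
        then obtain j1 where j1: "red_pos L j1" "L ! (j1 + 1) = e1" "f = L ! j1 \<or> f \<in> cmap H (L ! j1)" using m1 by blast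
        show False
        proof (cases "f \<in> cmap H e2")
          case A2: True
          from j1(3) show False
          proof
            assume "f = L ! j1" then show False using I4[OF seqj[OF j1(1)]] A2 by simp
          next
            assume "f \<in> cmap H (L ! j1)"
            then have "e2 = L ! j1" using I5[of e2 "L ! j1"] A2 by auto
            then show False using m2 redin[OF j1(1)] by simp
          qed
        next
          case A2: False
          then obtain j2 where j2: "red_pos L j2" "L ! (j2 + 1) = e2" "f = L ! j2 \<or> f \<in> cmap H (L ! j2)" using m2 by blast
          have "L ! j1 = L ! j2"
          proof -
            { assume a: "f = L ! j1"
              have "f \<notin> cmap H (L ! j2)" using I4[OF seqj[OF j1(1)]] a by simp
              then have "f = L ! j2" using j2(3) by simp
              then have ?thesis using a by simp }
            moreover
            { assume a: "f \<in> cmap H (L ! j1)"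
              have "f \<noteq> L ! j2" using I4[OF seqj[OF j2(1)]] a by auto
              then have "f \<in> cmap H (L ! j2)" using j2(3) by simp
              then have ?thesis using a I5[of "L ! j1" "L ! j2"] by auto }
            ultimately show ?thesis using j1(3) by blast
          qed
          then have "j1 = j2" using inj j1(1) j2(1) by simp
          then show False using j1(2) j2(2) ne by simp
        qed
      qed
    qed
  qed
  have d6: "\<forall>(K, r)\<in>set (seqs rH). \<forall>w\<in>set K. \<forall>f\<in>wmap rH w. \<exists>c\<in>set K. w < c \<and> f \<in> cmap rH c"
  proof (intro ballI, clarify)
    fix K r w f assume Kr: "(K, r) \<in> set (seqs rH)" and w: "w \<in> set K" and f: "f \<in> wmap rH w"
    from Kr consider "(K, r) \<in> set xs \<or> (K, r) \<in> set ys" | "K = rL" by (auto simp: rH_def)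
    then show "\<exists>c\<in>set K. w < c \<and> f \<in> cmap rH c"
    proof cases
      case 1
      then have K1: "(K, r) \<in> set (seqs H)" using sq by auto
      have K2: "(K, r) \<in> set (xs @ ys)" using 1 by auto
      have "w \<in> si_of (xs @ ys)" using si_of_mem[OF K2 w] .
      then have "w \<notin> set L" using disjL by blast
      then have "f \<in> wmap H w" using f rW_nonL by (simp add: rH_def)
      then obtain c where c: "c \<in> set K" "w < c" "f \<in> cmap H c" using I6[OF K1 w] by blast
      have "c \<in> si_of (xs @ ys)" using si_of_mem[OF K2 c(1)] .
      then have "c \<notin> set L" using disjL by blast
      then show ?thesis using c rC_nonL by (auto simp: rH_def)
    next
      case 2
      have "w \<in> set rL" using w 2 by simp
      then obtain k where k: "k < length L" "\<not> red_pos L k" "w = L ! k"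
        unfolding rL_def set_reduce_fst by blast
      have fw: "f \<in> rW (L ! k)" using f k by (simp add: rH_def)
      have "f \<in> wmap H (L ! k) \<or> (red_pos L (k + 1) \<and> (f = L ! (k + 1) \<or> f \<in> wmap H (L ! (k + 1))))"
        using fw rW_keep[OF k(1,2)] by (cases "red_pos L (k + 1)") auto
      then show ?thesis
      proof (elim disjE conjE)
        assume a: "f \<in> wmap H (L ! k)"
        obtain c where c: "c \<in> set L" "L ! k < c" "f \<in> cmap H c" using I6[OF L_in _ a] k by auto
        obtain c' where c': "c' \<in> set rL" "c \<le> c'" "f \<in> rC c'" using lift_C[OF c(1,3)] by blast
        have "L ! k < c'" using c(2) c'(2) by (rule less_le_trans)
        then show ?thesis using c' k 2 by (auto simp: rH_def)
      next
        assume r: "red_pos L (k + 1)" and a: "f = L ! (k + 1)"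
        have s: "k + 2 < length L" "\<not> red_pos L (k + 2)" using red_succ[OF r] by auto
        have "rC (L ! (k + 2)) = cmap H (L ! (k + 2)) \<union> insert (L ! (k + 1)) (cmap H (L ! (k + 1)))"
        proof -
          have e: "k + 2 - 1 = k + 1" by simp
          have "0 < k + 2 \<and> red_pos L (k + 2 - 1)" using r e by simp
          then show ?thesis using rC_keep[OF s] e by simp
        qed
        then have "f \<in> rC (L ! (k + 2))" using a by simp
        moreover have "L ! k < L ! (k + 2)" using nth_less[of k "k+2"] s by simp
        ultimately show ?thesis using keep_in_rL[OF s] k 2 by (auto simp: rH_def)
      next
        assume r: "red_pos L (k + 1)" and a: "f \<in> wmap H (L ! (k + 1))"
        have kk: "k + 1 < length L" using red_lt[OF r] by simp
        obtain c where c: "c \<in> set L" "L ! (k + 1) < c" "f \<in> cmap H c"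
          using I6[OF L_in _ a] kk by auto
        obtain c' where c': "c' \<in> set rL" "c \<le> c'" "f \<in> rC c'" using lift_C[OF c(1,3)] by blast
        have "L ! k < L ! (k + 1)" using nth_less[of k "k+1"] kk by simp
        then have "L ! k < c'" using c(2) c'(2) by (meson less_trans less_le_trans)
        then show ?thesis using c' k 2 by (auto simp: rH_def)
      qed
    qed
  qed
  have d7: "\<forall>e. finite (cmap rH e) \<and> finite (wmap rH e)"
  proof
    fix e
    have "finite (rC e)" unfolding rC_def by (rule reduce_C_fin) (rule I7)
    moreover have "finite (rW e)" unfolding rW_def by (rule reduce_W_fin) (rule I7)
    ultimately show "finite (cmap rH e) \<and> finite (wmap rH e)" by (simp add: rH_def)
  qed
  show ?thesis unfolding sinv_def using d1 d2 d3 d4 d5 d6 d7 by blast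
qed


lemma other_not_L: "(K, r) \<in> set (xs @ ys) \<Longrightarrow> c \<in> set K \<Longrightarrow> c \<notin> set L"
proof -
  assume K: "(K, r) \<in> set (xs @ ys)" and c: "c \<in> set K"
  have "c \<in> si_of (xs @ ys)" using si_of_mem[OF K c] .
  then show ?thesis using disjL by blast
qed

lemma CW_other: "c \<notin> set L \<Longrightarrow> cmap rH c = cmap H c \<and> wmap rH c = wmap H c"
  using rC_nonL rW_nonL by (simp add: rH_def)

lemma Dset_other: "(K, r) \<in> set (xs @ ys) \<Longrightarrow> Dset rH K x \<subseteq> Dset H K x"
proof (rule Dset_mono)
  fix c f assume K: "(K, r) \<in> set (xs @ ys)" and c: "c \<in> set K" and f: "f \<in> cmap rH c"
  have cL: "c \<notin> set L" using other_not_L[OF K c] .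
  have fc: "f \<in> cmap H c" using f CW_other[OF cL] by simp
  have "wit H f \<subseteq> wit rH f"
  proof
    fix w assume w: "w \<in> wit H f"
    show "w \<in> wit rH f"
    proof (cases "w \<in> set L")
      case True
      have "f \<in> wmap H w" using w by (simp add: wit_def)
      then obtain c'' where c'': "c'' \<in> set L" "f \<in> cmap H c''" using I6[OF L_in True] by blast
      then have "c'' = c" using I5[of c'' c] fc by auto
      then show ?thesis using c'' cL by simp
    next
      case False
      then have "w \<notin> redset L" using redset_sub[of L] by blast
      then show ?thesis using wit_lift[OF w] by (auto simp: redset_def)
    qed
  qed
  then show "f \<in> cmap H c \<and> wit H f \<subseteq> wit rH f" using fc by simp
qed

lemma wit_none: "wit rH f = {} \<Longrightarrow> wit H f = {}"
  using wit_lift by blast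

lemma rL_sub: "set rL \<subseteq> set L" using rL_set by blast

lemma Dset_None: "Dset rH rL None \<subseteq> Dset H L None"
proof
  fix f assume "f \<in> Dset rH rL None"
  then obtain c where c: "c \<in> set rL" "f \<in> rC c" and nw: "wit rH f = {}"
    unfolding Dset_def in_I_wit by (auto simp: rH_def)
  have nw2: "wit H f = {}" using wit_none[OF nw] .
  have cL: "c \<in> set L" using c(1) rL_sub by blast
  from rC_mem[OF c(2)] consider "f \<in> cmap H c" | j where "red_pos L j" "f = L ! j"
    | j where "red_pos L j" "f \<in> cmap H (L ! j)" by blast
  then show "f \<in> Dset H L None"
  proof cases
    case 1 then show ?thesis using cL nw2 unfolding Dset_def in_I_wit by auto
  next
    case (2 j)
    have p: "j - 1 < length L" "\<not> red_pos L (j - 1)" using red_pred[OF 2(1)] by auto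
    have "L ! (j - 1) \<in> wit rH f" using red_wit[OF 2(1)] keep_in_rH[OF p] 2(2)
      by (simp add: wit_def rH_def)
    then show ?thesis using nw by simp
  next
    case (3 j)
    have "L ! j \<in> set L" using red_lt[OF 3(1)] by simp
    then show ?thesis using 3(2) nw2 unfolding Dset_def in_I_wit by auto
  qed
qed

definition "PP y = {p. red_pos L p \<and> L ! (p - 1) < y \<and> y \<le> L ! (p + 1)}"
definition "EE y = (\<Union>p\<in>PP y. insert (L ! p) (if y \<le> L ! p then wmap H (L ! p) else cmap H (L ! p)))"

lemma PP_unique: "p \<in> PP y \<Longrightarrow> q \<in> PP y \<Longrightarrow> p = q"
proof (rule ccontr)
  assume p: "p \<in> PP y" and q: "q \<in> PP y" and ne: "p \<noteq> q"
  have "\<not> p < q" if p: "p \<in> PP y" and q: "q \<in> PP y" for p q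
  proof
    assume lt: "p < q"
    have rp: "red_pos L p" and rq: "red_pos L q" using p q by (auto simp: PP_def)
    have "odd p" "odd q" using rp rq by (auto simp: red_pos_def)
    then have "p + 1 \<le> q - 1" using lt by (auto elim!: oddE)
    moreover have "q - 1 < length L" using red_pred[OF rq] by simp
    ultimately have "L ! (p + 1) \<le> L ! (q - 1)" by (rule nth_le)
    then show False using p q by (auto simp: PP_def)
  qed
  then show False using p q ne by (meson linorder_neqE_nat)
qed

lemma wit_claim:
  assumes "\<forall>w\<in>wit rH f. w < y"
  shows "(\<forall>w\<in>wit H f. w < y) \<or> (\<exists>p\<in>PP y. y \<le> L ! p \<and> f \<in> wmap H (L ! p))"
proof (rule ccontr)
  assume "\<not> ?thesis"
  then obtain w where w: "w \<in> wit H f" "\<not> w < y" and no: "\<not> (\<exists>p\<in>PP y. y \<le> L ! p \<and> f \<in> wmap H (L ! p))"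
    by blast
  from wit_lift[OF w(1)] show False
  proof
    assume "w \<notin> redset L \<and> w \<in> wit rH f"
    then show False using assms w(2) by blast
  next
    assume "\<exists>p. red_pos L p \<and> w = L ! p \<and> L ! (p - 1) \<in> wit rH f"
    then obtain p where p: "red_pos L p" "w = L ! p" "L ! (p - 1) \<in> wit rH f" by blast
    have "L ! (p - 1) < y" using assms p(3) by blast
    have s: "p + 1 < length L" using red_succ[OF p(1)] by simp
    have "L ! p < L ! (p + 1)" using nth_less[of p "p + 1"] s by simp
    then have "y \<le> L ! (p + 1)" using w(2) p(2) by simp
    then have "p \<in> PP y" using p(1) \<open>L ! (p - 1) < y\<close> by (simp add: PP_def)
    moreover have "f \<in> wmap H (L ! p)" using w(1) p(2) by (simp add: wit_def)
    ultimately show False using no w(2) p(2) by simp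
  qed
qed

lemma Dset_Some: "Dset rH rL (Some y) \<subseteq> Dset H L (Some y) \<union> EE y"
proof
  fix f assume "f \<in> Dset rH rL (Some y)"
  then obtain c where c: "c \<in> set rL" "f \<in> rC c" "y \<le> c" and ww: "\<forall>w\<in>wit rH f. w < y"
    unfolding Dset_def in_I_wit by (auto simp: rH_def)
  have cL: "c \<in> set L" using c(1) rL_sub by blast
  note cl = wit_claim[OF ww]
  have inE: "f \<in> EE y" if "p \<in> PP y" "f = L ! p \<or> (y \<le> L ! p \<and> f \<in> wmap H (L ! p)) \<or> (\<not> y \<le> L ! p \<and> f \<in> cmap H (L ! p))" for p
    using that unfolding EE_def by auto
  have inD: "f \<in> Dset H L (Some y)" if "c' \<in> set L" "f \<in> cmap H c'" "y \<le> c'" "\<forall>w\<in>wit H f. w < y" for c'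
    using that unfolding Dset_def in_I_wit by auto
  from rC_mem[OF c(2)] consider "f \<in> cmap H c" | j where "red_pos L j" "L ! (j + 1) = c" "f = L ! j"
    | j where "red_pos L j" "L ! (j + 1) = c" "f \<in> cmap H (L ! j)" by blast
  then show "f \<in> Dset H L (Some y) \<union> EE y"
  proof cases
    case 1
    from cl show ?thesis
    proof
      assume "\<forall>w\<in>wit H f. w < y" then show ?thesis using inD[OF cL 1 c(3)] by simp
    next
      assume "\<exists>p\<in>PP y. y \<le> L ! p \<and> f \<in> wmap H (L ! p)"
      then show ?thesis using inE by blast
    qed
  next
    case (2 j)
    have p: "j - 1 < length L" "\<not> red_pos L (j - 1)" using red_pred[OF 2(1)] by auto
    have "L ! (j - 1) \<in> wit rH f" using red_wit[OF 2(1)] keep_in_rH[OF p] 2(3)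
      by (simp add: wit_def rH_def)
    then have "L ! (j - 1) < y" using ww by blast
    then have "j \<in> PP y" using 2 c(3) by (simp add: PP_def)
    then show ?thesis using inE 2(3) by blast
  next
    case (3 j)
    have jL: "L ! j \<in> set L" using red_lt[OF 3(1)] by simp
    show ?thesis
    proof (cases "y \<le> L ! j")
      case True
      from cl show ?thesis
      proof
        assume "\<forall>w\<in>wit H f. w < y" then show ?thesis using inD[OF jL 3(3) True] by simp
      next
        assume "\<exists>p\<in>PP y. y \<le> L ! p \<and> f \<in> wmap H (L ! p)"
        then show ?thesis using inE by blast
      qed
    next
      case False
      have p: "0 < j" "j - 1 < length L" using red_pred[OF 3(1)] by auto
      have "L ! (j - 1) < L ! j" using nth_less[of "j - 1" j] p red_lt[OF 3(1)] by simp
      then have "L ! (j - 1) < y" using False by simp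
      then have "j \<in> PP y" using 3 c(3) by (simp add: PP_def)
      then show ?thesis using inE 3(3) False by blast
    qed
  qed
qed

lemma card_Dset:
  assumes b: "\<forall>e\<in>set L. card (cmap H e) \<le> b \<and> card (wmap H e) \<le> b"
  shows "card (Dset rH rL x) \<le> card (Dset H L x) + b + 1"
proof (cases x)
  case None
  have "card (Dset rH rL None) \<le> card (Dset H L None)"
    by (rule card_mono[OF Dset_finite[OF inv] Dset_None])
  then show ?thesis using None by simp
next
  case (Some y)
  have fD: "finite (Dset H L (Some y))" by (rule Dset_finite[OF inv])
  have cE: "finite (EE y) \<and> card (EE y) \<le> b + 1"
  proof (cases "PP y = {}")
    case True then show ?thesis by (simp add: EE_def)
  next
    case False
    then obtain p where p: "p \<in> PP y" by blast
    then have P1: "PP y = {p}" using PP_unique by blast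
    define S where "S = (if y \<le> L ! p then wmap H (L ! p) else cmap H (L ! p))"
    have E: "EE y = insert (L ! p) S" by (simp add: EE_def P1 S_def)
    have pL: "L ! p \<in> set L" using p red_lt[of L p] by (simp add: PP_def)
    have fS: "finite S" using I7 by (simp add: S_def)
    have "card S \<le> b" using b pL by (simp add: S_def)
    then show ?thesis using E fS card_insert_le_m1 by (simp add: card_insert_if)
  qed
  have "card (Dset rH rL (Some y)) \<le> card (Dset H L (Some y) \<union> EE y)"
    by (rule card_mono) (use fD cE Dset_Some in auto)
  also have "\<dots> \<le> card (Dset H L (Some y)) + card (EE y)" by (rule card_Un_le)
  finally show ?thesis using Some cE by simp
qed

lemma card_ins: "finite A \<Longrightarrow> card (insert a A) \<le> card A + 1"
  by (simp add: card_insert_if)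

lemma card_CW:
  assumes b: "\<forall>e\<in>set L. card (cmap H e) \<le> b \<and> card (wmap H e) \<le> b"
    and e: "e \<in> set rL"
  shows "card (cmap rH e) \<le> 2 * b + 1 \<and> card (wmap rH e) \<le> 2 * b + 1"
proof -
  obtain k where k: "k < length L" "\<not> red_pos L k" "e = L ! k"
    using e unfolding rL_def set_reduce_fst by blast
  have eL: "e \<in> set L" using k by simp
  have c1: "card (rC e) \<le> 2 * b + 1"
  proof -
    define T where "T = (if 0 < k \<and> red_pos L (k - 1) then insert (L ! (k - 1)) (cmap H (L ! (k - 1))) else {})"
    have eq: "rC e = cmap H e \<union> T" using rC_keep[OF k(1,2)] k(3) by (simp add: T_def)
    have "card T \<le> b + 1"
    proof (cases "0 < k \<and> red_pos L (k - 1)")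
      case True
      have "L ! (k - 1) \<in> set L" using k by simp
      then have "card (cmap H (L ! (k - 1))) \<le> b" using b by blast
      then show ?thesis using True card_ins[OF I7(1), of "L ! (k - 1)" "L ! (k - 1)"] by (simp add: T_def)
    next
      case False then show ?thesis unfolding T_def if_not_P[OF False] by simp
    qed
    moreover have "card (cmap H e) \<le> b" using b eL by blast
    moreover have "card (rC e) \<le> card (cmap H e) + card T" unfolding eq by (rule card_Un_le)
    ultimately show ?thesis by simp
  qed
  have c2: "card (rW e) \<le> 2 * b + 1"
  proof -
    define T where "T = (if red_pos L (k + 1) then insert (L ! (k + 1)) (wmap H (L ! (k + 1))) else {})"
    have eq: "rW e = wmap H e \<union> T" using rW_keep[OF k(1,2)] k(3) by (simp add: T_def)
    have "card T \<le> b + 1"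
    proof (cases "red_pos L (k + 1)")
      case True
      have "L ! (k + 1) \<in> set L" using red_lt[OF True] by simp
      then have "card (wmap H (L ! (k + 1))) \<le> b" using b by blast
      then show ?thesis using True card_ins[OF I7(2), of "L ! (k + 1)" "L ! (k + 1)"] by (simp add: T_def)
    next
      case False then show ?thesis unfolding T_def if_not_P[OF False] by simp
    qed
    moreover have "card (wmap H e) \<le> b" using b eL by blast
    moreover have "card (rW e) \<le> card (wmap H e) + card T" unfolding eq by (rule card_Un_le)
    ultimately show ?thesis by simp
  qed
  show ?thesis using c1 c2 by (simp add: rH_def)
qed

end

definition bnd :: "nat \<Rightarrow> 'k::linorder sheap \<Rightarrow> bool" where
  "bnd r0 H \<longleftrightarrow> (\<forall>(L, r)\<in>set (seqs H). (\<forall>x. card (Dset H L x) \<le> aa (r - r0)) \<and>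
      (\<forall>e\<in>set L. card (cmap H e) \<le> gg (r - r0) \<and> card (wmap H e) \<le> gg (r - r0)))"

lemma bndD: "bnd r0 H \<Longrightarrow> (K, r) \<in> set (seqs H) \<Longrightarrow> (\<forall>x. card (Dset H K x) \<le> aa (r - r0)) \<and>
      (\<forall>e\<in>set K. card (cmap H e) \<le> gg (r - r0) \<and> card (wmap H e) \<le> gg (r - r0))"
  unfolding bnd_def by (drule bspec) auto

lemma dist_perm: "set M = set N \<Longrightarrow> distinct M = distinct N \<Longrightarrow> distinct (A @ M @ D) = distinct (A @ N @ D)"
  by (simp add: distinct_append)

lemma Dset_Un: "Dset H (A @ B) x = Dset H A x \<union> Dset H B x"
  unfolding Dset_def by auto

lemma Dset_sort: "Dset H (sort L) x = Dset H L x"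
  unfolding Dset_def by simp

lemma si_sort_app: "set (sort (LA @ LB)) = set LA \<union> set LB" by simp

context
  fixes H :: "'k::linorder sheap" and xs ys :: "('k list \<times> nat) list" and LA LB :: "'k list" and r :: nat
  assumes inv: "sinv H" and sq: "seqs H = xs @ (LA, r) # (LB, r) # ys"
begin

definition "mL = sort (LA @ LB)"
definition "mH = \<lparr>seqs = xs @ (mL, Suc r) # ys, cmap = cmap H, wmap = wmap H\<rparr>"

lemma mH_si: "seq_items mH = seq_items H"
  by (simp add: seq_items_si mH_def sq mL_def Un_assoc)

lemma mH_Dset: "Dset mH = Dset H"
  by (rule Dset_cong[OF mH_si]) (simp_all add: mH_def)

lemma mH_cw: "cmap mH = cmap H" "wmap mH = wmap H" by (simp_all add: mH_def)

lemma sinv_mH: "sinv mH"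
proof -
  have dist: "distinct (concat (map fst xs) @ LA @ LB @ concat (map fst ys))"
    using inv sq by (simp add: sinv_def)
  have d1: "distinct (concat (map fst (seqs mH)))"
  proof -
    have "distinct (concat (map fst xs) @ mL @ concat (map fst ys))"
      using dist dist_perm[of mL "LA @ LB" "concat (map fst xs)" "concat (map fst ys)"] by (simp add: mL_def)
    then show ?thesis by (simp add: mH_def)
  qed
  have ne: "LA \<noteq> []" "sorted_wrt (<) LA" "LB \<noteq> []" "sorted_wrt (<) LB"
    using inv sq by (auto simp: sinv_def)
  have a: "distinct (LA @ LB @ concat (map fst ys))" using dist distinct_append by blast
  have "distinct (LA @ LB)" using a by (metis append_assoc distinct_append)
  then have dm: "distinct mL" by (simp add: mL_def)
  have d2: "\<forall>(K, r)\<in>set (seqs mH). K \<noteq> [] \<and> sorted_wrt (<) K"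
  proof -
    have "set mL \<noteq> {}" using ne by (simp add: mL_def)
    then have "mL \<noteq> []" by auto
    moreover have "sorted_wrt (<) mL" using dm by (simp add: strict_sorted_iff mL_def)
    ultimately show ?thesis using inv sq by (auto simp: mH_def sinv_def)
  qed
  have d6: "\<forall>(K, r')\<in>set (seqs mH). \<forall>w\<in>set K. \<forall>f\<in>wmap mH w. \<exists>c\<in>set K. w < c \<and> f \<in> cmap mH c"
  proof (intro ballI, clarify)
    fix K r' w f assume Kr: "(K, r') \<in> set (seqs mH)" and w: "w \<in> set K" and f: "f \<in> wmap mH w"
    have I6: "\<And>K r w f. (K, r) \<in> set (seqs H) \<Longrightarrow> w \<in> set K \<Longrightarrow> f \<in> wmap H w \<Longrightarrow> \<exists>c\<in>set K. w < c \<and> f \<in> cmap H c"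
      using inv by (fastforce simp: sinv_def)
    have fH: "f \<in> wmap H w" using f by (simp add: mH_def)
    from Kr consider "(K, r') \<in> set xs \<or> (K, r') \<in> set ys" | "K = mL" by (auto simp: mH_def)
    then show "\<exists>c\<in>set K. w < c \<and> f \<in> cmap mH c"
    proof cases
      case 1
      then have "(K, r') \<in> set (seqs H)" using sq by auto
      then show ?thesis using I6 w fH by (simp add: mH_def)
    next
      case 2
      then have "w \<in> set LA \<or> w \<in> set LB" using w by (simp add: mL_def)
      then show ?thesis
      proof
        assume wa: "w \<in> set LA"
        have "(LA, r) \<in> set (seqs H)" using sq by simp
        then obtain c where "c \<in> set LA" "w < c" "f \<in> cmap H c" using I6 wa fH by blast
        then show ?thesis using 2 by (auto simp: mH_def mL_def)
      next
        assume wb: "w \<in> set LB"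
        have "(LB, r) \<in> set (seqs H)" using sq by simp
        then obtain c where "c \<in> set LB" "w < c" "f \<in> cmap H c" using I6 wb fH by blast
        then show ?thesis using 2 by (auto simp: mH_def mL_def)
      qed
    qed
  qed
  show ?thesis using inv d1 d2 d6 unfolding sinv_def by (simp add: mH_si) (simp add: mH_def)
qed

lemma bnd_mH_L: "bnd r0 H \<Longrightarrow> card (Dset mH mL x) \<le> 2 * aa (r - r0)"
proof -
  assume b: "bnd r0 H"
  have "(LA, r) \<in> set (seqs H)" "(LB, r) \<in> set (seqs H)" using sq by auto
  then have c: "card (Dset H LA x) \<le> aa (r - r0)" "card (Dset H LB x) \<le> aa (r - r0)"
    using bndD[OF b] by auto
  have "Dset mH mL x = Dset H LA x \<union> Dset H LB x"
    by (simp add: mH_Dset mL_def Dset_sort Dset_Un)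
  then have "card (Dset mH mL x) \<le> card (Dset H LA x) + card (Dset H LB x)"
    by (simp add: card_Un_le)
  then show ?thesis using c by simp
qed

lemma bnd_mH_CW: "bnd r0 H \<Longrightarrow> e \<in> set mL \<Longrightarrow> card (cmap mH e) \<le> gg (r - r0) \<and> card (wmap mH e) \<le> gg (r - r0)"
proof -
  assume b: "bnd r0 H" and e: "e \<in> set mL"
  have "(LA, r) \<in> set (seqs H)" "(LB, r) \<in> set (seqs H)" using sq by auto
  moreover have "e \<in> set LA \<or> e \<in> set LB" using e by (simp add: mL_def)
  ultimately show ?thesis using bndD[OF b] by (auto simp: mH_def)
qed

lemma bnd_mH: "bnd r0 H \<Longrightarrow> bnd r0 mH"
proof -
  assume b: "bnd r0 H"
  show ?thesis unfolding bnd_def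
  proof (intro ballI, clarify)
    fix K r' assume Kr: "(K, r') \<in> set (seqs mH)"
    from Kr consider "(K, r') \<in> set xs \<or> (K, r') \<in> set ys" | "K = mL" "r' = Suc r" by (auto simp: mH_def)
    then show "(\<forall>x. card (Dset mH K x) \<le> aa (r' - r0)) \<and>
       (\<forall>e\<in>set K. card (cmap mH e) \<le> gg (r' - r0) \<and> card (wmap mH e) \<le> gg (r' - r0))"
    proof cases
      case 1
      then have "(K, r') \<in> set (seqs H)" using sq by auto
      then show ?thesis using bndD[OF b] by (simp add: mH_Dset mH_cw)
    next
      case 2
      have "card (Dset mH mL x) \<le> aa (Suc r - r0)" for x
        using bnd_mH_L[OF b, of x] ar1[of r r0] by linarith
      moreover have "card (cmap mH e) \<le> gg (Suc r - r0) \<and> card (wmap mH e) \<le> gg (Suc r - r0)" if "e \<in> set mL" for e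
        using bnd_mH_CW[OF b that] ar2[of r r0] by linarith
      ultimately show ?thesis using 2 by simp
    qed
  qed
qed

lemma mH_seqs: "seqs mH = xs @ (mL, Suc r) # ys" by (simp add: mH_def)

end

lemma merge_step_inv:
  assumes inv: "sinv H" and b: "bnd r0 H" and ms: "merge_step r0 H H'"
  shows "sinv H' \<and> bnd r0 H'"
proof -
  obtain xs A B ys where all: "seqs H = xs @ A # B # ys \<and> snd A = snd B \<and>
      (case merge r0 A B (cmap H) (wmap H) of (M, C', W') \<Rightarrow>
         H' = \<lparr>seqs = xs @ M # ys, cmap = C', wmap = W'\<rparr>)"
    using ms unfolding merge_step_def by (elim exE) (rule that)
  have sq0: "seqs H = xs @ A # B # ys" and ab: "snd A = snd B"
    and hH: "case merge r0 A B (cmap H) (wmap H) of (M, C', W') \<Rightarrow>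
         H' = \<lparr>seqs = xs @ M # ys, cmap = C', wmap = W'\<rparr>"
    using all[THEN conjunct1] all[THEN conjunct2, THEN conjunct1] all[THEN conjunct2, THEN conjunct2] by auto
  obtain LA r where A: "A = (LA, r)" by (cases A)
  obtain LB where B: "B = (LB, r)" using ab A by (cases B) auto
  have sq: "seqs H = xs @ (LA, r) # (LB, r) # ys" using sq0 A B by simp
  define M where "M = mH H xs ys LA LB r"
  define Lm where "Lm = mL LA LB"
  have Lm: "Lm = sort (LA @ LB)" using mL_def[OF inv sq] by (simp add: Lm_def)
  have Mdef: "M = \<lparr>seqs = xs @ (Lm, Suc r) # ys, cmap = cmap H, wmap = wmap H\<rparr>"
    using mH_def[OF inv sq] by (simp add: M_def Lm_def)
  have invM: "sinv M" using sinv_mH[OF inv sq] by (simp add: M_def)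
  have bM: "bnd r0 M" using bnd_mH[OF inv sq b] by (simp add: M_def)
  have sqM: "seqs M = xs @ (Lm, Suc r) # ys" by (simp add: Mdef)
  have cwM: "cmap M = cmap H" "wmap M = wmap H" by (simp_all add: Mdef)
  have mg: "merge r0 A B (cmap H) (wmap H) = (if r0 < Suc r \<and> even (Suc r - r0)
      then (case reduce Lm (cmap H) (wmap H) of (L', C', W') \<Rightarrow> ((L', Suc r), C', W'))
      else ((Lm, Suc r), cmap H, wmap H))"
    by (simp only: merge_def A B Let_def fst_conv snd_conv Lm)
  show ?thesis
  proof (cases "r0 < Suc r \<and> even (Suc r - r0)")
    case False
    have "H' = \<lparr>seqs = xs @ (Lm, Suc r) # ys, cmap = cmap H, wmap = wmap H\<rparr>"
      using hH unfolding mg if_not_P[OF False] by simp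
    then have "H' = M" by (simp add: Mdef)
    then show ?thesis using invM bM by simp
  next
    case True
    define R where "R = rH M xs ys Lm (Suc r)"
    have Rdef: "R = \<lparr>seqs = xs @ (rL M Lm, Suc r) # ys, cmap = rC M Lm, wmap = rW M Lm\<rparr>"
      using rH_def[OF invM sqM] by (simp add: R_def)
    obtain L' C' W' where red: "reduce Lm (cmap H) (wmap H) = (L', C', W')" by (cases "reduce Lm (cmap H) (wmap H)") auto
    have "H' = \<lparr>seqs = xs @ (L', Suc r) # ys, cmap = C', wmap = W'\<rparr>"
      using hH unfolding mg if_P[OF True] red by simp
    moreover have "rL M Lm = L'" "rC M Lm = C'" "rW M Lm = W'"
      using rL_def[OF invM sqM] rC_def[OF invM sqM] rW_def[OF invM sqM] red cwM by simp_all
    ultimately have HR: "H' = R" by (simp add: Rdef)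
    have invR: "sinv R" using sinv_rH[OF invM sqM] by (simp add: R_def)
    have bCW: "\<forall>e\<in>set Lm. card (cmap M e) \<le> gg (r - r0) \<and> card (wmap M e) \<le> gg (r - r0)"
      using bnd_mH_CW[OF inv sq b] by (simp add: M_def Lm_def)
    have ar: "2 * aa (r - r0) + gg (r - r0) + 1 \<le> aa (Suc r - r0) \<and> 2 * gg (r - r0) + 1 \<le> gg (Suc r - r0)"
      using ar3 True by blast
    have bR: "bnd r0 R"
      unfolding bnd_def
    proof (intro ballI, clarify)
      fix K r' assume Kr: "(K, r') \<in> set (seqs R)"
      from Kr consider "(K, r') \<in> set (xs @ ys)" | "K = rL M Lm" "r' = Suc r" by (auto simp: Rdef)
      then show "(\<forall>x. card (Dset R K x) \<le> aa (r' - r0)) \<and>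
         (\<forall>e\<in>set K. card (cmap R e) \<le> gg (r' - r0) \<and> card (wmap R e) \<le> gg (r' - r0))"
      proof cases
        case 1
        have KM: "(K, r') \<in> set (seqs M)" using 1 sqM by auto
        note bK = bndD[OF bM KM]
        have "card (Dset R K x) \<le> aa (r' - r0)" for x
        proof -
          have "Dset R K x \<subseteq> Dset M K x" using Dset_other[OF invM sqM 1] by (simp add: R_def)
          then have "card (Dset R K x) \<le> card (Dset M K x)" by (rule card_mono[OF Dset_finite[OF invM]])
          then show ?thesis using bK[THEN conjunct1, rule_format, of x] by linarith
        qed
        moreover have "card (cmap R e) \<le> gg (r' - r0) \<and> card (wmap R e) \<le> gg (r' - r0)" if "e \<in> set K" for e
        proof -
          have "e \<notin> set Lm" using other_not_L[OF invM sqM 1 that] .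
          then have "cmap R e = cmap M e \<and> wmap R e = wmap M e" using CW_other[OF invM sqM] by (simp add: R_def)
          then show ?thesis using bK that by simp
        qed
        ultimately show ?thesis by blast
      next
        case 2
        have "card (Dset R K x) \<le> aa (r' - r0)" for x
        proof -
          have "card (Dset R K x) \<le> card (Dset M Lm x) + gg (r - r0) + 1"
            using card_Dset[OF invM sqM bCW] 2 by (simp add: R_def)
          moreover have "card (Dset M Lm x) \<le> 2 * aa (r - r0)"
            using bnd_mH_L[OF inv sq b] by (simp add: M_def Lm_def)
          moreover have "aa (r' - r0) = aa (Suc r - r0)" using 2 by simp
          ultimately show ?thesis using ar[THEN conjunct1] by linarith
        qed
        moreover have "card (cmap R e) \<le> gg (r' - r0) \<and> card (wmap R e) \<le> gg (r' - r0)" if "e \<in> set K" for e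
        proof -
          have "card (cmap R e) \<le> 2 * gg (r - r0) + 1 \<and> card (wmap R e) \<le> 2 * gg (r - r0) + 1"
            using card_CW[OF invM sqM bCW] that 2 by (simp add: R_def)
          moreover have "gg (r' - r0) = gg (Suc r - r0)" using 2 by simp
          ultimately show ?thesis using ar[THEN conjunct2] by linarith
        qed
        ultimately show ?thesis by blast
      qed
    qed
    show ?thesis using HR invR bR by simp
  qed
qed

lemma normalize_inv: "normalize r0 H H' \<Longrightarrow> sinv H \<Longrightarrow> bnd r0 H \<Longrightarrow> sinv H' \<and> bnd r0 H'"
  unfolding normalize_def
proof (elim conjE)
  assume st: "(merge_step r0)\<^sup>*\<^sup>* H H'" and i: "sinv H" "bnd r0 H"
  from st show "sinv H' \<and> bnd r0 H'"
  proof (induction rule: rtranclp_induct)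
    case base then show ?case using i by simp
  next
    case (step y z) then show ?case using merge_step_inv by blast
  qed
qed

lemma dc_insort: "distinct (concat (map fst (insort_key f x xs))) = distinct (concat (map fst (x # xs)))"
proof (induction xs)
  case Nil then show ?case by simp
next
  case (Cons y ys)
  have s: "set (concat (map fst (insort_key f x ys))) = set (fst x) \<union> set (concat (map fst ys))"
    by (auto simp: set_insort_key)
  show ?case
  proof (cases "f x \<le> f y")
    case True then show ?thesis by simp
  next
    case False
    then have "distinct (concat (map fst (insort_key f x (y # ys)))) =
       distinct (fst y @ concat (map fst (insort_key f x ys)))" by simp
    also have "\<dots> = (distinct (fst y) \<and> distinct (concat (map fst (x # ys))) \<and>
        set (fst y) \<inter> (set (fst x) \<union> set (concat (map fst ys))) = {})"
      using Cons.IH s by (simp only: distinct_append)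
    also have "\<dots> = distinct (concat (map fst (x # y # ys)))"
      by (auto simp: distinct_append)
    finally show ?thesis .
  qed
qed

lemma dc_sort: "distinct (concat (map fst (sort_key f xs))) = distinct (concat (map fst xs))"
proof (induction xs)
  case Nil then show ?case by simp
next
  case (Cons x xs)
  have s: "set (concat (map fst (sort_key f xs))) = set (concat (map fst xs))" by auto
  have "distinct (concat (map fst (sort_key f (x # xs)))) = distinct (concat (map fst (x # sort_key f xs)))"
    by (simp add: dc_insort)
  also have "\<dots> = distinct (concat (map fst (x # xs)))"
    using Cons.IH s by (simp only: list.map concat.simps distinct_append)
  finally show ?case .
qed

lemma sinv_parts:
  assumes "sinv H"
  shows "distinct (concat (map fst (seqs H)))"
    "\<And>K r. (K, r) \<in> set (seqs H) \<Longrightarrow> K \<noteq> [] \<and> sorted_wrt (<) K"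
    "\<And>e. e \<notin> seq_items H \<Longrightarrow> cmap H e = {} \<and> wmap H e = {}"
    "\<And>e e'. e \<in> seq_items H \<Longrightarrow> e \<notin> cmap H e'"
    "\<And>e1 e2. e1 \<noteq> e2 \<Longrightarrow> cmap H e1 \<inter> cmap H e2 = {}"
    "\<And>K r w f. (K, r) \<in> set (seqs H) \<Longrightarrow> w \<in> set K \<Longrightarrow> f \<in> wmap H w \<Longrightarrow> \<exists>c\<in>set K. w < c \<and> f \<in> cmap H c"
    "\<And>e. finite (cmap H e)" "\<And>e. finite (wmap H e)"
proof -
  show "distinct (concat (map fst (seqs H)))" using assms by (simp add: sinv_def)
  show "K \<noteq> [] \<and> sorted_wrt (<) K" if "(K, r) \<in> set (seqs H)" for K r using assms that by (auto simp: sinv_def)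
  show "cmap H e = {} \<and> wmap H e = {}" if "e \<notin> seq_items H" for e using assms that by (simp add: sinv_def)
  show "e \<notin> cmap H e'" if "e \<in> seq_items H" for e e' using assms that by (simp add: sinv_def)
  show "cmap H e1 \<inter> cmap H e2 = {}" if "e1 \<noteq> e2" for e1 e2 using assms that by (simp add: sinv_def)
  show "\<exists>c\<in>set K. w < c \<and> f \<in> cmap H c" if "(K, r) \<in> set (seqs H)" "w \<in> set K" "f \<in> wmap H w" for K r w f
    using assms that by (fastforce simp: sinv_def)
  show "finite (cmap H e)" "finite (wmap H e)" for e using assms by (simp_all add: sinv_def)
qed

lemma sinvI:
  assumes a1: "distinct (concat (map fst (seqs H)))"
    and a2: "\<And>K r. (K, r) \<in> set (seqs H) \<Longrightarrow> K \<noteq> [] \<and> sorted_wrt (<) K"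
    and a3: "\<And>e. e \<notin> seq_items H \<Longrightarrow> cmap H e = {} \<and> wmap H e = {}"
    and a4: "\<And>e e'. e \<in> seq_items H \<Longrightarrow> e \<notin> cmap H e'"
    and a5: "\<And>e1 e2. e1 \<noteq> e2 \<Longrightarrow> cmap H e1 \<inter> cmap H e2 = {}"
    and a6: "\<And>K r w f. (K, r) \<in> set (seqs H) \<Longrightarrow> w \<in> set K \<Longrightarrow> f \<in> wmap H w \<Longrightarrow> \<exists>c\<in>set K. w < c \<and> f \<in> cmap H c"
    and a7: "\<And>e. finite (cmap H e)" and a8: "\<And>e. finite (wmap H e)"
  shows "sinv H"
  unfolding sinv_def
proof (intro conjI allI impI)
  show "distinct (concat (map fst (seqs H)))" by (rule a1)
  show "\<forall>(L, r)\<in>set (seqs H). L \<noteq> [] \<and> sorted_wrt (<) L"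
  proof clarify
    fix K r assume "(K, r) \<in> set (seqs H)" then show "K \<noteq> [] \<and> sorted_wrt (<) K" by (rule a2)
  qed
  show "cmap H e = {}" if "e \<notin> seq_items H" for e using a3[OF that] by blast
  show "wmap H e = {}" if "e \<notin> seq_items H" for e using a3[OF that] by blast
  show "e \<notin> cmap H e'" if "e \<in> seq_items H" for e e' by (rule a4[OF that])
  show "cmap H e1 \<inter> cmap H e2 = {}" if "e1 \<noteq> e2" for e1 e2 by (rule a5[OF that])
  show "\<forall>(L, r)\<in>set (seqs H). \<forall>w\<in>set L. \<forall>f\<in>wmap H w. \<exists>c\<in>set L. w < c \<and> f \<in> cmap H c"
  proof clarify
    fix K r w f assume "(K, r) \<in> set (seqs H)" "w \<in> set K" "f \<in> wmap H w"
    then show "\<exists>c\<in>set K. w < c \<and> f \<in> cmap H c" by (rule a6)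
  qed
  show "finite (cmap H e)" for e by (rule a7)
  show "finite (wmap H e)" for e by (rule a8)
qed

lemma bndI:
  assumes "\<And>K r. (K, r) \<in> set (seqs H) \<Longrightarrow> (\<forall>x. card (Dset H K x) \<le> aa (r - r0)) \<and>
      (\<forall>e\<in>set K. card (cmap H e) \<le> gg (r - r0) \<and> card (wmap H e) \<le> gg (r - r0))"
  shows "bnd r0 H"
  using assms unfolding bnd_def by blast

lemma seq_items_mem: "(K, r) \<in> set (seqs H) \<Longrightarrow> w \<in> set K \<Longrightarrow> w \<in> seq_items H"
  unfolding seq_items_def by blast

lemma Dset_wit_eq: assumes a: "\<And>f. wit H' f = wit H f" and b: "cmap H' = cmap H" shows "Dset H' = Dset H"
  unfolding Dset_def in_I_wit a b ..

lemma card_le_via: "sinv H \<Longrightarrow> Dset H' K x \<subseteq> Dset H K' x' \<Longrightarrow> card (Dset H K' x') \<le> n \<Longrightarrow> card (Dset H' K x) \<le> n"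
  using card_mono[OF Dset_finite] le_trans by metis

lemma insert_inv:
  assumes inv: "sinv H" and b: "bnd r0 H" and e: "e \<notin> heap_items H"
  shows "sinv (insert_init e H) \<and> bnd r0 (insert_init e H)"
proof -
  note P = sinv_parts[OF inv]
  have es: "e \<notin> seq_items H" using e by (simp add: heap_items_def)
  have eC: "e \<notin> cmap H c" for c
  proof (cases "c \<in> seq_items H")
    case True then show ?thesis using e by (auto simp: heap_items_def)
  next
    case False then show ?thesis using P(3) by blast
  qed
  have ce: "cmap H e = {}" "wmap H e = {}" using P(3)[OF es] by auto
  define I where "I = \<lparr>seqs = ([e], 0) # seqs H, cmap = cmap H, wmap = wmap H\<rparr>"
  have II: "insert_init e H = I" unfolding insert_init_def I_def using ce by (simp add: fun_upd_idem)
  have sqI: "seqs I = ([e], 0) # seqs H" and cI: "cmap I = cmap H" and wI: "wmap I = wmap H"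
    by (simp_all add: I_def)
  have siI: "seq_items I = insert e (seq_items H)" unfolding seq_items_si sqI by simp
  have witI: "wit I f = wit H f" for f unfolding wit_def siI wI using ce by auto
  have DI: "Dset I = Dset H" by (rule Dset_wit_eq[OF witI cI])
  have sI: "sinv I"
  proof (rule sinvI)
    have "set (concat (map fst (seqs H))) = seq_items H" by (simp only: seq_items_si set_concat_si)
    then have "e \<notin> set (concat (map fst (seqs H)))" using es by simp
    then show "distinct (concat (map fst (seqs I)))" using P(1) by (simp add: sqI)
    show "K \<noteq> [] \<and> sorted_wrt (<) K" if "(K, r) \<in> set (seqs I)" for K r
      using that P(2) by (auto simp: sqI)
    show "cmap I x = {} \<and> wmap I x = {}" if "x \<notin> seq_items I" for x
      using that P(3) by (simp add: siI cI wI)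
    show "x \<notin> cmap I x'" if "x \<in> seq_items I" for x x'
    proof -
      have "x = e \<or> x \<in> seq_items H" using that siI by simp
      then show ?thesis using P(4) eC by (auto simp: cI)
    qed
    show "cmap I e1 \<inter> cmap I e2 = {}" if "e1 \<noteq> e2" for e1 e2 using that P(5) by (simp add: cI)
    show "\<exists>c\<in>set K. w < c \<and> f \<in> cmap I c" if "(K, r) \<in> set (seqs I)" "w \<in> set K" "f \<in> wmap I w" for K r w f
    proof -
      from that(1) have "(K, r) = ([e], 0) \<or> (K, r) \<in> set (seqs H)" by (simp add: sqI)
      then show ?thesis
      proof
        assume "(K, r) = ([e], 0)"
        then show ?thesis using that(2,3) ce by (simp add: wI)
      next
        assume "(K, r) \<in> set (seqs H)"
        then show ?thesis using P(6) that(2,3) by (simp add: wI cI)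
      qed
    qed
    show "finite (cmap I x)" "finite (wmap I x)" for x using P(7,8) by (simp_all add: cI wI)
  qed
  have bI: "bnd r0 I"
  proof (rule bndI)
    fix K r assume "(K, r) \<in> set (seqs I)"
    then have "(K, r) = ([e], 0) \<or> (K, r) \<in> set (seqs H)" by (simp add: sqI)
    then show "(\<forall>x. card (Dset I K x) \<le> aa (r - r0)) \<and>
      (\<forall>e\<in>set K. card (cmap I e) \<le> gg (r - r0) \<and> card (wmap I e) \<le> gg (r - r0))"
    proof
      assume a: "(K, r) = ([e], 0)"
      have "Dset H [e] x = {}" for x using ce by (simp add: Dset_def)
      then show ?thesis using a ce by (simp add: DI cI wI)
    next
      assume "(K, r) \<in> set (seqs H)"
      then show ?thesis using bndD[OF b] by (simp add: DI cI wI)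
    qed
  qed
  show ?thesis using sI bI II by simp
qed

lemma heap_items_sub: "seq_items H \<subseteq> heap_items H" "c \<in> seq_items H \<Longrightarrow> cmap H c \<subseteq> heap_items H"
  by (auto simp: heap_items_def)

lemma meld_inv:
  assumes i1: "sinv H1" and b1: "bnd r0 H1" and i2: "sinv H2" and b2: "bnd r0 H2"
    and dj: "heap_items H1 \<inter> heap_items H2 = {}"
  shows "sinv (meld_init H1 H2) \<and> bnd r0 (meld_init H1 H2)"
proof -
  note P1 = sinv_parts[OF i1] and P2 = sinv_parts[OF i2]
  define M where "M = meld_init H1 H2"
  have sqM0: "seqs M = sort_key snd (seqs H1 @ seqs H2)" by (simp add: M_def meld_init_def)
  have sqM: "set (seqs M) = set (seqs H1) \<union> set (seqs H2)" by (simp add: sqM0)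
  have siM: "seq_items M = seq_items H1 \<union> seq_items H2"
    unfolding seq_items_def sqM by blast
  have cM: "cmap M e = (if e \<in> seq_items H1 then cmap H1 e else cmap H2 e)" for e
    by (simp add: M_def meld_init_def)
  have wM: "wmap M e = (if e \<in> seq_items H1 then wmap H1 e else wmap H2 e)" for e
    by (simp add: M_def meld_init_def)
  have si12: "seq_items H1 \<inter> seq_items H2 = {}" using dj heap_items_sub(1)[of H1] heap_items_sub(1)[of H2] by blast
  have h1: "cmap H1 c \<subseteq> heap_items H1" for c
    using heap_items_sub(2)[of c H1] P1(3)[of c] by (cases "c \<in> seq_items H1") auto
  have h2: "cmap H2 c \<subseteq> heap_items H2" for c
    using heap_items_sub(2)[of c H2] P2(3)[of c] by (cases "c \<in> seq_items H2") auto
  have sM: "sinv M"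
  proof (rule sinvI)
    have "distinct (concat (map fst (seqs H1)) @ concat (map fst (seqs H2)))"
    proof -
      have "set (concat (map fst (seqs H1))) = seq_items H1" "set (concat (map fst (seqs H2))) = seq_items H2"
        by (simp_all only: seq_items_si set_concat_si)
      then show ?thesis using P1(1) P2(1) si12 by simp
    qed
    then show "distinct (concat (map fst (seqs M)))" unfolding sqM0 dc_sort by simp
    show "K \<noteq> [] \<and> sorted_wrt (<) K" if "(K, r) \<in> set (seqs M)" for K r
      using that P1(2) P2(2) sqM by blast
    show "cmap M x = {} \<and> wmap M x = {}" if "x \<notin> seq_items M" for x
      using that P2(3)[of x] by (simp add: siM cM wM)
    show "x \<notin> cmap M x'" if "x \<in> seq_items M" for x x'
    proof
      assume xc: "x \<in> cmap M x'"
      show False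
      proof (cases "x' \<in> seq_items H1")
        case True
        then have a: "x \<in> cmap H1 x'" using xc cM by simp
        have "x \<in> seq_items H1 \<or> x \<in> seq_items H2" using that siM by simp
        then show False
        proof
          assume "x \<in> seq_items H1" then show False using P1(4) a by blast
        next
          assume "x \<in> seq_items H2"
          then show False using a h1 heap_items_sub(1)[of H2] dj by blast
        qed
      next
        case False
        then have a: "x \<in> cmap H2 x'" using xc cM by simp
        have "x \<in> seq_items H1 \<or> x \<in> seq_items H2" using that siM by simp
        then show False
        proof
          assume "x \<in> seq_items H2" then show False using P2(4) a by blast
        next
          assume "x \<in> seq_items H1"
          then show False using a h2 heap_items_sub(1)[of H1] dj by blast
        qed
      qed
    qed
    show "cmap M e1 \<inter> cmap M e2 = {}" if "e1 \<noteq> e2" for e1 e2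
    proof -
      have "cmap H1 e1 \<inter> cmap H2 e2 = {}" "cmap H2 e1 \<inter> cmap H1 e2 = {}"
        using h1 h2 dj by blast+
      then show ?thesis using P1(5)[OF that] P2(5)[OF that] by (simp add: cM)
    qed
    show "\<exists>c\<in>set K. w < c \<and> f \<in> cmap M c" if t: "(K, r) \<in> set (seqs M)" "w \<in> set K" "f \<in> wmap M w" for K r w f
    proof -
      have "(K, r) \<in> set (seqs H1) \<or> (K, r) \<in> set (seqs H2)" using t(1) sqM by blast
      then show ?thesis
      proof
        assume K: "(K, r) \<in> set (seqs H1)"
        have Ks: "\<And>c. c \<in> set K \<Longrightarrow> c \<in> seq_items H1" using seq_items_mem[OF K] by blast
        have "f \<in> wmap H1 w" using t(3) Ks[OF t(2)] wM by simp
        then obtain c where "c \<in> set K" "w < c" "f \<in> cmap H1 c" using P1(6)[OF K t(2)] by blast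
        then show ?thesis using Ks cM by auto
      next
        assume K: "(K, r) \<in> set (seqs H2)"
        have Ks: "\<And>c. c \<in> set K \<Longrightarrow> c \<in> seq_items H2 \<and> c \<notin> seq_items H1" using seq_items_mem[OF K] si12 by blast
        have "f \<in> wmap H2 w" using t(3) Ks[OF t(2)] wM by simp
        then obtain c where "c \<in> set K" "w < c" "f \<in> cmap H2 c" using P2(6)[OF K t(2)] by blast
        then show ?thesis using Ks cM by auto
      qed
    qed
    show "finite (cmap M x)" "finite (wmap M x)" for x using P1(7,8) P2(7,8) by (simp_all add: cM wM)
  qed
  have bM: "bnd r0 M"
  proof (rule bndI)
    fix K r assume "(K, r) \<in> set (seqs M)"
    then have "(K, r) \<in> set (seqs H1) \<or> (K, r) \<in> set (seqs H2)" using sqM by blast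
    then show "(\<forall>x. card (Dset M K x) \<le> aa (r - r0)) \<and>
      (\<forall>e\<in>set K. card (cmap M e) \<le> gg (r - r0) \<and> card (wmap M e) \<le> gg (r - r0))"
    proof
      assume K: "(K, r) \<in> set (seqs H1)"
      have Ks: "\<And>c. c \<in> set K \<Longrightarrow> c \<in> seq_items H1" using seq_items_mem[OF K] by blast
      note bK = bndD[OF b1 K]
      have "Dset M K x \<subseteq> Dset H1 K x" for x
      proof (rule Dset_mono)
        fix c f assume c: "c \<in> set K" and f: "f \<in> cmap M c"
        have "f \<in> cmap H1 c" using f Ks[OF c] cM by simp
        moreover have "wit H1 f \<subseteq> wit M f" by (auto simp: wit_def siM wM)
        ultimately show "f \<in> cmap H1 c \<and> wit H1 f \<subseteq> wit M f" by blast
      qed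
      then have "card (Dset M K x) \<le> aa (r - r0)" for x
        using card_le_via[OF i1] bK[THEN conjunct1, rule_format, of x] by blast
      moreover have "card (cmap M e) \<le> gg (r - r0) \<and> card (wmap M e) \<le> gg (r - r0)" if "e \<in> set K" for e
        using bK that Ks[OF that] by (simp add: cM wM)
      ultimately show ?thesis by blast
    next
      assume K: "(K, r) \<in> set (seqs H2)"
      have Ks: "\<And>c. c \<in> set K \<Longrightarrow> c \<in> seq_items H2 \<and> c \<notin> seq_items H1" using seq_items_mem[OF K] si12 by blast
      note bK = bndD[OF b2 K]
      have "Dset M K x \<subseteq> Dset H2 K x" for x
      proof (rule Dset_mono)
        fix c f assume c: "c \<in> set K" and f: "f \<in> cmap M c"
        have "f \<in> cmap H2 c" using f Ks[OF c] cM by simp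
        moreover have "wit H2 f \<subseteq> wit M f" using si12 by (auto simp: wit_def siM wM)
        ultimately show "f \<in> cmap H2 c \<and> wit H2 f \<subseteq> wit M f" by blast
      qed
      then have "card (Dset M K x) \<le> aa (r - r0)" for x
        using card_le_via[OF i2] bK[THEN conjunct1, rule_format, of x] by blast
      moreover have "card (cmap M e) \<le> gg (r - r0) \<and> card (wmap M e) \<le> gg (r - r0)" if "e \<in> set K" for e
        using bK that Ks[OF that] by (simp add: cM wM)
      ultimately show ?thesis by blast
    qed
  qed
  show ?thesis using sM bM by (simp add: M_def)
qed

lemma extract_corrupted_inv:
  assumes inv: "sinv H" and b: "bnd r0 H" and ee: "e' \<in> cmap H e"
    and H': "H' = \<lparr>seqs = seqs H, cmap = (cmap H)(e := cmap H e - {e'}), wmap = (\<lambda>x. wmap H x - {e'})\<rparr>"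
  shows "sinv H' \<and> bnd r0 H'"
proof -
  note P = sinv_parts[OF inv]
  have sq: "seqs H' = seqs H" using H' by simp
  have si: "seq_items H' = seq_items H" by (simp add: seq_items_si sq)
  have cH: "cmap H' x = (if x = e then cmap H e - {e'} else cmap H x)" for x using H' by simp
  have wH: "wmap H' x = wmap H x - {e'}" for x using H' by simp
  have csub: "cmap H' x \<subseteq> cmap H x" for x using cH by auto
  have fne: "f \<noteq> e'" if "f \<in> cmap H' c" for f c
  proof (cases "c = e")
    case True then show ?thesis using that cH by simp
  next
    case False
    then have "f \<in> cmap H c" using that cH by simp
    then show ?thesis using P(5)[OF False] ee by blast
  qed
  have sI: "sinv H'"
  proof (rule sinvI)
    show "distinct (concat (map fst (seqs H')))" using P(1) sq by simp
    show "K \<noteq> [] \<and> sorted_wrt (<) K" if "(K, r) \<in> set (seqs H')" for K r using that P(2) sq by simp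
    show "cmap H' x = {} \<and> wmap H' x = {}" if "x \<notin> seq_items H'" for x
      using that P(3)[of x] csub[of x] si wH by auto
    show "x \<notin> cmap H' x'" if "x \<in> seq_items H'" for x x' using that P(4) csub si by blast
    show "cmap H' e1 \<inter> cmap H' e2 = {}" if "e1 \<noteq> e2" for e1 e2 using P(5)[OF that] csub by blast
    show "\<exists>c\<in>set K. w < c \<and> f \<in> cmap H' c" if t: "(K, r) \<in> set (seqs H')" "w \<in> set K" "f \<in> wmap H' w" for K r w f
    proof -
      have f1: "f \<in> wmap H w" "f \<noteq> e'" using t(3) wH by auto
      obtain c where c: "c \<in> set K" "w < c" "f \<in> cmap H c" using P(6)[OF _ t(2) f1(1)] t(1) sq by auto
      have "f \<in> cmap H' c" using c(3) f1(2) cH by (cases "c = e") auto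
      then show ?thesis using c by blast
    qed
    show "finite (cmap H' x)" for x using P(7) csub finite_subset by blast
    show "finite (wmap H' x)" for x using P(8) wH by simp
  qed
  have bI: "bnd r0 H'"
  proof (rule bndI)
    fix K r assume K: "(K, r) \<in> set (seqs H')"
    then have K0: "(K, r) \<in> set (seqs H)" using sq by simp
    note bK = bndD[OF b K0]
    have "Dset H' K x \<subseteq> Dset H K x" for x
    proof (rule Dset_mono)
      fix c f assume c: "c \<in> set K" and f: "f \<in> cmap H' c"
      have "f \<in> cmap H c" using f csub by blast
      moreover have "wit H f \<subseteq> wit H' f" using fne[OF f] by (auto simp: wit_def si wH)
      ultimately show "f \<in> cmap H c \<and> wit H f \<subseteq> wit H' f" by blast
    qed
    then have "card (Dset H' K x) \<le> aa (r - r0)" for x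
      using card_le_via[OF inv] bK[THEN conjunct1, rule_format, of x] by blast
    moreover have "card (cmap H' e) \<le> gg (r - r0) \<and> card (wmap H' e) \<le> gg (r - r0)" if "e \<in> set K" for e
    proof -
      have "card (cmap H' e) \<le> card (cmap H e)" by (rule card_mono[OF P(7) csub])
      moreover have "card (wmap H' e) \<le> card (wmap H e)" using wH P(8) by (simp add: card_mono)
      ultimately show ?thesis using bK that by fastforce
    qed
    ultimately show "(\<forall>x. card (Dset H' K x) \<le> aa (r - r0)) \<and>
      (\<forall>e\<in>set K. card (cmap H' e) \<le> gg (r - r0) \<and> card (wmap H' e) \<le> gg (r - r0))" by blast
  qed
  show ?thesis using sI bI by simp
qed


lemma hd_le: "sorted_wrt (<) (xs :: 'a::linorder list) \<Longrightarrow> c \<in> set xs \<Longrightarrow> hd xs \<le> c"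
  by (cases xs) (auto simp: less_imp_le)

lemma extract_head_inv:
  assumes inv: "sinv H" and b: "bnd r0 H" and sq: "seqs H = xs @ (e # rest, r) # ys"
    and ce: "cmap H e = {}"
    and H': "H' = \<lparr>seqs = xs @ (if rest = [] then [] else [(rest, r)]) @ ys,
                       cmap = cmap H, wmap = (wmap H)(e := {})\<rparr>"
  shows "sinv H' \<and> bnd r0 H'"
proof -
  note P = sinv_parts[OF inv]
  define mid where "mid = (if rest = [] then [] else [(rest, r)])"
  have sq': "seqs H' = xs @ mid @ ys" using H' by (simp add: mid_def)
  have cH: "cmap H' = cmap H" using H' by simp
  have wH: "wmap H' = (wmap H)(e := {})" using H' by simp
  have cm: "concat (map fst mid) = rest" by (simp add: mid_def)
  have dist: "distinct (concat (map fst xs) @ (e # rest) @ concat (map fst ys))" using P(1) sq by simp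
  have sxy: "set (concat (map fst xs)) = si_of xs" "set (concat (map fst ys)) = si_of ys"
    by (simp_all only: set_concat_si)
  have ne: "e \<notin> si_of xs" "e \<notin> si_of ys" "e \<notin> set rest" using dist sxy by auto
  have disj: "set (e # rest) \<inter> (si_of xs \<union> si_of ys) = {}" using dist sxy by auto
  have sr: "sorted_wrt (<) (e # rest)" using P(2)[of "e # rest" r] sq by simp
  have si0: "seq_items H = si_of xs \<union> set (e # rest) \<union> si_of ys" by (simp add: seq_items_si sq Un_assoc)
  have si': "seq_items H' = si_of xs \<union> set rest \<union> si_of ys"
    by (simp add: seq_items_si sq' mid_def Un_assoc)
  have si'2: "seq_items H' = seq_items H - {e}" using si0 si' ne by auto
  have Kc: "(K, r') \<in> set xs \<or> (K, r') \<in> set ys \<or> (K = rest \<and> r' = r \<and> rest \<noteq> [])"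
    if "(K, r') \<in> set (seqs H')" for K r' using that by (auto simp: sq' mid_def split: if_splits)
  have LH: "(e # rest, r) \<in> set (seqs H)" using sq by simp
  have eless: "e < c" if "c \<in> set rest" for c using sr that by simp
  have sI: "sinv H'"
  proof (rule sinvI)
    have "distinct (concat (map fst xs) @ rest @ concat (map fst ys))" using dist by simp
    then show "distinct (concat (map fst (seqs H')))" by (simp add: sq' cm)
    show "K \<noteq> [] \<and> sorted_wrt (<) K" if "(K, r') \<in> set (seqs H')" for K r'
      using Kc[OF that] P(2) sq sr by auto
    show "cmap H' x = {} \<and> wmap H' x = {}" if "x \<notin> seq_items H'" for x
    proof (cases "x = e")
      case True then show ?thesis using ce by (simp add: cH wH)
    next
      case False then show ?thesis using that P(3)[of x] si'2 by (simp add: cH wH)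
    qed
    show "x \<notin> cmap H' x'" if "x \<in> seq_items H'" for x x' using that P(4) si'2 by (simp add: cH)
    show "cmap H' e1 \<inter> cmap H' e2 = {}" if "e1 \<noteq> e2" for e1 e2 using P(5)[OF that] by (simp add: cH)
    show "\<exists>c\<in>set K. w < c \<and> f \<in> cmap H' c" if t: "(K, r') \<in> set (seqs H')" "w \<in> set K" "f \<in> wmap H' w" for K r' w f
    proof -
      consider "(K, r') \<in> set xs \<or> (K, r') \<in> set ys" | "K = rest" using Kc[OF t(1)] by blast
      then show ?thesis
      proof cases
        case 1
        then have K0: "(K, r') \<in> set (seqs H)" using sq by auto
        have "(K, r') \<in> set (xs @ ys)" using 1 by auto
        then have "w \<in> si_of (xs @ ys)" using si_of_mem t(2) by metis
        then have "w \<noteq> e" using ne by auto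
        then have "f \<in> wmap H w" using t(3) wH by simp
        then show ?thesis using P(6)[OF K0 t(2)] by (simp add: cH)
      next
        case 2
        have wr: "w \<in> set rest" using t(2) 2 by simp
        then have "w \<noteq> e" using ne by auto
        then have "f \<in> wmap H w" using t(3) wH by simp
        then obtain c where c: "c \<in> set (e # rest)" "w < c" "f \<in> cmap H c"
          using P(6)[OF LH] wr by auto
        have "c \<noteq> e" using c(2) eless[OF wr] by auto
        then show ?thesis using c 2 by (auto simp: cH)
      qed
    qed
    show "finite (cmap H' x)" "finite (wmap H' x)" for x using P(7,8) by (simp_all add: cH wH)
  qed
  have bI: "bnd r0 H'"
  proof (rule bndI)
    fix K r' assume K: "(K, r') \<in> set (seqs H')"
    consider "(K, r') \<in> set xs \<or> (K, r') \<in> set ys" | "K = rest" "r' = r" "rest \<noteq> []" using Kc[OF K] by blast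
    then show "(\<forall>x. card (Dset H' K x) \<le> aa (r' - r0)) \<and>
      (\<forall>e\<in>set K. card (cmap H' e) \<le> gg (r' - r0) \<and> card (wmap H' e) \<le> gg (r' - r0))"
    proof cases
      case 1
      then have K0: "(K, r') \<in> set (seqs H)" using sq by auto
      have Kxy: "(K, r') \<in> set (xs @ ys)" using 1 by auto
      have Kne: "c \<noteq> e \<and> c \<notin> set (e # rest)" if "c \<in> set K" for c
        using si_of_mem[OF Kxy that] disj by auto
      note bK = bndD[OF b K0]
      have "Dset H' K x \<subseteq> Dset H K x" for x
      proof (rule Dset_mono)
        fix c f assume c: "c \<in> set K" and f: "f \<in> cmap H' c"
        have fc: "f \<in> cmap H c" using f cH by simp
        have "wit H f \<subseteq> wit H' f"
        proof
          fix w assume w: "w \<in> wit H f"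
          have "w \<noteq> e"
          proof
            assume we: "w = e"
            then have "f \<in> wmap H e" using w by (simp add: wit_def)
            then obtain c'' where c'': "c'' \<in> set (e # rest)" "f \<in> cmap H c''" using P(6)[OF LH] by auto
            then have "c'' = c" using P(5)[of c'' c] fc by auto
            then show False using c'' Kne[OF c] by simp
          qed
          then show "w \<in> wit H' f" using w si'2 wH by (simp add: wit_def)
        qed
        then show "f \<in> cmap H c \<and> wit H f \<subseteq> wit H' f" using fc by blast
      qed
      then have "card (Dset H' K x) \<le> aa (r' - r0)" for x
        using card_le_via[OF inv] bK[THEN conjunct1, rule_format, of x] by blast
      moreover have "card (cmap H' c) \<le> gg (r' - r0) \<and> card (wmap H' c) \<le> gg (r' - r0)" if "c \<in> set K" for c
        using bK that Kne[OF that] by (simp add: cH wH)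
      ultimately show ?thesis by blast
    next
      case 2
      note bK = bndD[OF b LH]
      have hr: "e < hd rest" using eless 2(3) by simp
      have "card (Dset H' K x) \<le> aa (r' - r0)" for x
      proof -
        define x' where "x' = Some (case x of None \<Rightarrow> hd rest | Some y \<Rightarrow> max y (hd rest))"
        have "Dset H' K x \<subseteq> Dset H (e # rest) x'"
        proof
          fix f assume "f \<in> Dset H' K x"
          then obtain c where c: "c \<in> set rest" "f \<in> cmap H c" and iI: "in_I H' f c x"
            unfolding Dset_def using 2 cH by auto
          have hc: "hd rest \<le> c" using hd_le[of rest c] sr c(1) by simp
          have wsub: "w = e \<or> w \<in> wit H' f" if "w \<in> wit H f" for w
            using that si'2 wH by (auto simp: wit_def)
          have "in_I H f c x'"
          proof (cases x)
            case None
            then have "wit H' f = {}" using iI by (simp add: in_I_wit)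
            then have "\<forall>w\<in>wit H f. w < hd rest" using wsub hr by blast
            then show ?thesis using None hc by (simp add: in_I_wit x'_def)
          next
            case (Some y)
            then have y: "y \<le> c" "\<forall>w\<in>wit H' f. w < y" using iI by (auto simp: in_I_wit)
            have "\<forall>w\<in>wit H f. w < max y (hd rest)"
            proof
              fix w assume "w \<in> wit H f"
              then have "w = e \<or> w \<in> wit H' f" by (rule wsub)
              then show "w < max y (hd rest)" using hr y(2) by (auto simp: less_max_iff_disj)
            qed
            then show ?thesis using Some y(1) hc by (simp add: in_I_wit x'_def)
          qed
          then show "f \<in> Dset H (e # rest) x'" using c unfolding Dset_def by auto
        qed
        then show ?thesis using card_le_via[OF inv] bK[THEN conjunct1, rule_format, of x'] 2 by blast
      qed
      moreover have "card (cmap H' c) \<le> gg (r' - r0) \<and> card (wmap H' c) \<le> gg (r' - r0)" if "c \<in> set K" for c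
      proof -
        have "c \<noteq> e" "c \<in> set (e # rest)" using that 2 ne by auto
        then show ?thesis using bK 2 by (simp add: cH wH)
      qed
      ultimately show ?thesis by blast
    qed
  qed
  show ?thesis using sI bI by simp
qed

lemma empty_inv: "sinv (empty_heap :: 'k::linorder sheap) \<and> bnd r0 (empty_heap :: 'k sheap)"
proof
  show "sinv (empty_heap :: 'k sheap)"
    by (rule sinvI) (simp_all add: empty_heap_def seq_items_def)
  show "bnd r0 (empty_heap :: 'k sheap)"
    by (rule bndI) (simp add: empty_heap_def)
qed

lemma reach_inv: "reachable r0 H \<Longrightarrow> sinv H \<and> bnd r0 H"
proof (induction rule: reachable.induct)
  case empty
  then show ?case by (rule empty_inv)
next
  case (insert H e H')
  then show ?case using insert_inv normalize_inv by blast
next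
  case (meld H1 H2 H')
  then show ?case using meld_inv normalize_inv by blast
next
  case (extract_corrupted H e e' H')
  then show ?case using extract_corrupted_inv by blast
next
  case (extract_head H xs e rest r ys H')
  then show ?case using extract_head_inv by blast
qed

theorem lemma7:
  fixes eps :: real and H :: "'k::linorder sheap"
  assumes "0 < eps" and "eps < 1"
    and "reachable (nat \<lceil>log 2 (1 / eps)\<rceil>) H"
  shows "\<forall>(L, r)\<in>set (seqs H).
           (\<forall>x. finite (Dset H L x) \<and> card (Dset H L x) \<le> dbound (nat \<lceil>log 2 (1 / eps)\<rceil>) r)
         \<and> card {e. corrupted H e \<and> (\<exists>e'\<in>set L. e \<in> cmap H e')}
             \<le> dbound (nat \<lceil>log 2 (1 / eps)\<rceil>) r"
proof (clarify)
  fix L r assume Lr: "(L, r) \<in> set (seqs H)"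
  define r0 where "r0 = nat \<lceil>log 2 (1 / eps)\<rceil>"
  have iv: "sinv H" "bnd r0 H" using reach_inv assms(3) by (auto simp: r0_def)
  note bL = bndD[OF iv(2) Lr]
  have D: "finite (Dset H L x) \<and> card (Dset H L x) \<le> dbound r0 r" for x
    using Dset_finite[OF iv(1)] bL[THEN conjunct1, rule_format, of x] aa_dbound[of r r0] by simp
  have "{e. corrupted H e \<and> (\<exists>e'\<in>set L. e \<in> cmap H e')} \<subseteq> Dset H L None"
    by (auto simp: corrupted_def Dset_def in_I_def)
  then have "card {e. corrupted H e \<and> (\<exists>e'\<in>set L. e \<in> cmap H e')} \<le> card (Dset H L None)"
    by (rule card_mono[OF Dset_finite[OF iv(1)]])
  then have C: "card {e. corrupted H e \<and> (\<exists>e'\<in>set L. e \<in> cmap H e')} \<le> dbound r0 r"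
    using D[of None] by simp
  show "(\<forall>x. finite (Dset H L x) \<and> card (Dset H L x) \<le> dbound (nat \<lceil>log 2 (1 / eps)\<rceil>) r) \<and>
         card {e. corrupted H e \<and> (\<exists>e'\<in>set L. e \<in> cmap H e')} \<le> dbound (nat \<lceil>log 2 (1 / eps)\<rceil>) r"
    using D C by (simp add: r0_def)
qed

end
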